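(* Let $\mathcal{F}^\mathcal{P}=(\mu_n,\mathcal{S}_n,L_n,\pi_n)_{n\ge1}$ be the family of product chains induced by $\mathcal{F}$ and $\mathcal{P}$. Then $\mathcal{F}^\mathcal{P}$ has an $L^2$-cutoff if and only if there is a sequence $t_n>0$ such that \[\lim_{n\to\infty}\sum_{i=1}^{\ell_n}d_{n,i,2}(\mu_{n,i},ap_{n,i}t_n)^2=\begin{cases}0,&a>1,\\ \infty,&0<a<1.\end{cases}\] Further, with $\mathcal{T}_n(\epsilon)=\min\{t\ge0:\sum_{i=1}^{\ell_n}d_{n,i,2}(\mu_{n,i},p_{n,i}t)^2\le\epsilon\}$, one has \[T_{n,2}(\mu_n,\sqrt{e^\epsilon-1})\le\mathcal{T}_n(\epsilon)\le T_{n,2}(\mu_n,\sqrt\epsilon)\quad\text{for all }\epsilon>0.\]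
   Context: $\mathcal{F}=\{(\mu_{n,i},\mathcal{S}_{n,i},L_{n,i},\pi_{n,i}):1\le i\le\ell_n,n\ge1\}$ is a triangular array of irreducible continuous-time finite Markov chains (initial distribution $\mu_{n,i}$, generator $L_{n,i}$, stationary distribution $\pi_{n,i}$), and $\mathcal{P}=\{p_{n,i}>0\}$ a triangular array with $\sum_{i=1}^{\ell_n}p_{n,i}\le1$. The product chain has $\mathcal{S}_n=\prod_i\mathcal{S}_{n,i}$, $\mu_n=\mu_{n,1}\times\dots\times\mu_{n,\ell_n}$, $\pi_n=\pi_{n,1}\times\dots\times\pi_{n,\ell_n}$ and $L_n=\sum_{i=1}^{\ell_n}p_{n,i}I_{n,1}\otimes\dots\otimes I_{n,i-1}\otimes L_{n,i}\otimes I_{n,i+1}\otimes\dots\otimes I_{n,\ell_n}$ ($I_{n,i}$ identity on $\mathcal{S}_{n,i}$). For a continuous-time chain, $d_2(\mu,t)=\big(\sum_y|\mu e^{tL}(y)/\pi(y)-1|^2\pi(y)\big)^{1/2}$; $d_{n,2}$, $d_{n,i,2}$ are these for the product chain and the $(n,i)$ component, and $T_{n,2}(\mu_n,\epsilon)=\min\{t\ge0:d_{n,2}(\mu_n,t)\le\epsilon\}$. $L^2$-cutoff: there is $t_n>0$ with $d_{n,2}(\mu_n,(1+a)t_n)\to0$ and $d_{n,2}(\mu_n,(1-a)t_n)\to\infty$ for all $a\in(0,1)$. *)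

theory Defs
  imports "HOL-Analysis.Analysis"
begin

text \<open>A generator (Q-matrix) on a finite nonempty state space S, given as a function
  on S x S; values outside S are irrelevant.\<close>
definition generator :: "'a set \<Rightarrow> ('a \<Rightarrow> 'a \<Rightarrow> real) \<Rightarrow> bool" where
  "generator S L \<longleftrightarrow> finite S \<and> S \<noteq> {} \<and>
     (\<forall>x\<in>S. \<forall>y\<in>S. x \<noteq> y \<longrightarrow> 0 \<le> L x y) \<and>
     (\<forall>x\<in>S. (\<Sum>y\<in>S. L x y) = 0)"

definition irreducible_gen :: "'a set \<Rightarrow> ('a \<Rightarrow> 'a \<Rightarrow> real) \<Rightarrow> bool" where
  "irreducible_gen S L \<longleftrightarrow>
     (\<forall>x\<in>S. \<forall>y\<in>S. (x, y) \<in> {(u, v). u \<in> S \<and> v \<in> S \<and> u \<noteq> v \<and> 0 < L u v}\<^sup>*)"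

definition prob_distr :: "'a set \<Rightarrow> ('a \<Rightarrow> real) \<Rightarrow> bool" where
  "prob_distr S \<mu> \<longleftrightarrow> (\<forall>x\<in>S. 0 \<le> \<mu> x) \<and> (\<Sum>x\<in>S. \<mu> x) = 1"

definition stationary :: "'a set \<Rightarrow> ('a \<Rightarrow> 'a \<Rightarrow> real) \<Rightarrow> ('a \<Rightarrow> real) \<Rightarrow> bool" where
  "stationary S L \<pi> \<longleftrightarrow> prob_distr S \<pi> \<and> (\<forall>y\<in>S. (\<Sum>x\<in>S. \<pi> x * L x y) = 0)"

definition finite_chain ::
  "('a \<Rightarrow> real) \<Rightarrow> 'a set \<Rightarrow> ('a \<Rightarrow> 'a \<Rightarrow> real) \<Rightarrow> ('a \<Rightarrow> real) \<Rightarrow> bool" where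
  "finite_chain \<mu> S L \<pi> \<longleftrightarrow> generator S L \<and> irreducible_gen S L \<and>
     prob_distr S \<mu> \<and> stationary S L \<pi>"

fun mpow :: "'a set \<Rightarrow> ('a \<Rightarrow> 'a \<Rightarrow> real) \<Rightarrow> nat \<Rightarrow> 'a \<Rightarrow> 'a \<Rightarrow> real" where
  "mpow S L 0 x y = (if x = y then 1 else 0)"
| "mpow S L (Suc k) x y = (\<Sum>z\<in>S. L x z * mpow S L k z y)"

definition heat :: "'a set \<Rightarrow> ('a \<Rightarrow> 'a \<Rightarrow> real) \<Rightarrow> real \<Rightarrow> 'a \<Rightarrow> 'a \<Rightarrow> real" where
  "heat S L t x y = (\<Sum>k. t ^ k / fact k * mpow S L k x y)"

definition d2 :: "'a set \<Rightarrow> ('a \<Rightarrow> 'a \<Rightarrow> real) \<Rightarrow> ('a \<Rightarrow> real) \<Rightarrow> ('a \<Rightarrow> real) \<Rightarrow> real \<Rightarrow> real" where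
  "d2 S L \<pi> \<mu> t =
     sqrt (\<Sum>y\<in>S. ((\<Sum>x\<in>S. \<mu> x * heat S L t x y) / \<pi> y - 1)\<^sup>2 * \<pi> y)"

definition prod_space :: "nat set \<Rightarrow> (nat \<Rightarrow> 'a set) \<Rightarrow> (nat \<Rightarrow> 'a) set" where
  "prod_space I S = PiE I S"

definition prod_distr :: "nat set \<Rightarrow> (nat \<Rightarrow> 'a \<Rightarrow> real) \<Rightarrow> (nat \<Rightarrow> 'a) \<Rightarrow> real" where
  "prod_distr I \<mu> x = (\<Prod>i\<in>I. \<mu> i (x i))"

text \<open>Entries of sum_i p_i I x ... x L_i x ... x I.\<close>
definition prod_gen :: "nat set \<Rightarrow> (nat \<Rightarrow> real) \<Rightarrow> (nat \<Rightarrow> 'a \<Rightarrow> 'a \<Rightarrow> real)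
    \<Rightarrow> (nat \<Rightarrow> 'a) \<Rightarrow> (nat \<Rightarrow> 'a) \<Rightarrow> real" where
  "prod_gen I p L x y =
     (\<Sum>i\<in>I. p i * (if (\<forall>j\<in>I - {i}. x j = y j) then L i (x i) (y i) else 0))"

definition L2_cutoff :: "(nat \<Rightarrow> real \<Rightarrow> real) \<Rightarrow> bool" where
  "L2_cutoff d \<longleftrightarrow> (\<exists>tn :: nat \<Rightarrow> real. (\<forall>n. 0 < tn n) \<and>
     (\<forall>a. 0 < a \<and> a < 1 \<longrightarrow>
        ((\<lambda>n. d n ((1 + a) * tn n)) \<longlonglongrightarrow> 0) \<and>
        filterlim (\<lambda>n. d n ((1 - a) * tn n)) at_top sequentially))"

text \<open>min {t >= 0. f t <= eps} (rendered as infimum; the set is closed and nonempty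
  in the situation of interest, so this is the minimum).\<close>
definition mix_time :: "(real \<Rightarrow> real) \<Rightarrow> real \<Rightarrow> real" where
  "mix_time f \<epsilon> = Inf {t. 0 \<le> t \<and> f t \<le> \<epsilon>}"

end

theory Submission
  imports Defs
begin

definition mm :: "'a set \<Rightarrow> ('a\<Rightarrow>'a\<Rightarrow>real) \<Rightarrow> ('a\<Rightarrow>'a\<Rightarrow>real) \<Rightarrow> 'a\<Rightarrow>'a\<Rightarrow>real" where
  "mm S A B x y = (\<Sum>z\<in>S. A x z * B z y)"

definition ex :: "'a set \<Rightarrow> ('a\<Rightarrow>'a\<Rightarrow>real) \<Rightarrow> 'a\<Rightarrow>'a\<Rightarrow>real" where
  "ex S A x y = (\<Sum>k. mpow S A k x y / fact k)"

lemma mpow_Suc_mm: "mpow S A (Suc k) x y = mm S A (mpow S A k) x y"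
  by (simp add: mm_def)

lemma mm_assoc: "finite S \<Longrightarrow> mm S (mm S A B) C x y = mm S A (mm S B C) x y"
proof -
  have "mm S (mm S A B) C x y = (\<Sum>z\<in>S. \<Sum>w\<in>S. A x w * (B w z * C z y))"
    unfolding mm_def by (simp add: sum_distrib_right mult.assoc)
  also have "\<dots> = (\<Sum>w\<in>S. \<Sum>z\<in>S. A x w * (B w z * C z y))" by (rule sum.swap)
  also have "\<dots> = mm S A (mm S B C) x y" unfolding mm_def by (simp add: sum_distrib_left)
  finally show ?thesis .
qed

lemma if10_mult: "(if P then (1::real) else 0) * b = (if P then b else 0)"
  "b * (if P then (1::real) else 0) = (if P then b else 0)" by simp_all

lemma mm_id_left: "x \<in> S \<Longrightarrow> finite S \<Longrightarrow> mm S (mpow S A 0) B x y = B x y"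
  unfolding mm_def by (simp add: if10_mult)

lemma mm_id_right: "y \<in> S \<Longrightarrow> finite S \<Longrightarrow> mm S B (mpow S A 0) x y = B x y"
  unfolding mm_def by (simp add: if10_mult)

lemma mm_I_left: "x \<in> S \<Longrightarrow> finite S \<Longrightarrow> mm S (\<lambda>a b. if a = b then 1 else 0) B x y = B x y"
  unfolding mm_def by (simp add: if10_mult)

lemma mm_I_right: "y \<in> S \<Longrightarrow> finite S \<Longrightarrow> mm S B (\<lambda>a b. if a = b then 1 else 0) x y = B x y"
  unfolding mm_def by (simp add: if10_mult)

lemma mm_cong: "(\<And>z. z \<in> S \<Longrightarrow> A x z = A' x z) \<Longrightarrow> (\<And>z. z \<in> S \<Longrightarrow> B z y = B' z y) \<Longrightarrow>
   mm S A B x y = mm S A' B' x y"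
  unfolding mm_def by simp

lemma mpow_scale: "mpow S (\<lambda>x y. t * A x y) k x y = t ^ k * mpow S A k x y"
  by (induction k arbitrary: x) (auto simp: sum_distrib_left mult_ac)

lemma heat_ex: "heat S L t x y = ex S (\<lambda>x y. t * L x y) x y"
  unfolding heat_def ex_def by (simp add: mpow_scale)

lemma mpow_bound:
  assumes "finite S" "x \<in> S"
  shows "\<bar>mpow S A k x y\<bar> \<le> (\<Sum>u\<in>S. \<Sum>z\<in>S. \<bar>A u z\<bar>) ^ k"
  using assms(2)
proof (induction k arbitrary: x)
  case 0 then show ?case by simp
next
  case (Suc k)
  let ?B = "(\<Sum>u\<in>S. \<Sum>z\<in>S. \<bar>A u z\<bar>)"
  have "\<bar>mpow S A (Suc k) x y\<bar> \<le> (\<Sum>z\<in>S. \<bar>A x z\<bar> * \<bar>mpow S A k z y\<bar>)"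
    using sum_abs[of "\<lambda>z. A x z * mpow S A k z y" S] by (simp add: abs_mult)
  also have "\<dots> \<le> (\<Sum>z\<in>S. \<bar>A x z\<bar> * ?B ^ k)"
    by (intro sum_mono mult_left_mono Suc.IH) auto
  also have "\<dots> = (\<Sum>z\<in>S. \<bar>A x z\<bar>) * ?B ^ k" by (simp add: sum_distrib_right)
  also have "\<dots> \<le> ?B * ?B ^ k"
  proof (rule mult_right_mono)
    show "(\<Sum>z\<in>S. \<bar>A x z\<bar>) \<le> ?B"
      by (rule member_le_sum[where f="\<lambda>u. \<Sum>z\<in>S. \<bar>A u z\<bar>", OF Suc.prems])
         (auto intro: sum_nonneg assms)
    have "0 \<le> ?B" by (intro sum_nonneg) auto
    then show "0 \<le> ?B ^ k" by simp
  qed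
  finally show ?case by (simp only: power_Suc)
qed

lemma ex_summable_abs:
  assumes "finite S" "x \<in> S"
  shows "summable (\<lambda>k. norm (mpow S A k x y / fact k))"
proof (rule summable_comparison_test[OF _ summable_exp[of "\<Sum>u\<in>S. \<Sum>z\<in>S. \<bar>A u z\<bar>"]])
  have "norm (norm (mpow S A n x y / fact n)) \<le> inverse (fact n) * (\<Sum>u\<in>S. \<Sum>z\<in>S. \<bar>A u z\<bar>) ^ n" for n
  proof -
    have "norm (norm (mpow S A n x y / fact n)) = inverse (fact n) * \<bar>mpow S A n x y\<bar>"
      by (simp add: abs_mult divide_inverse mult.commute)
    also have "\<dots> \<le> inverse (fact n) * (\<Sum>u\<in>S. \<Sum>z\<in>S. \<bar>A u z\<bar>) ^ n"
      by (rule mult_left_mono[OF mpow_bound[OF assms]]) simp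
    finally show ?thesis .
  qed
  then show "\<exists>N. \<forall>n\<ge>N. norm (norm (mpow S A n x y / fact n)) \<le> inverse (fact n) * (\<Sum>u\<in>S. \<Sum>z\<in>S. \<bar>A u z\<bar>) ^ n"
    by blast
qed

lemma ex_summable: "finite S \<Longrightarrow> x \<in> S \<Longrightarrow> summable (\<lambda>k. mpow S A k x y / fact k)"
  by (rule summable_norm_cancel[OF ex_summable_abs])

lemma mm_commute_pow:
  assumes fin: "finite S" and C: "\<And>u v. u\<in>S \<Longrightarrow> v\<in>S \<Longrightarrow> mm S A B u v = mm S B A u v"
  shows "u\<in>S \<Longrightarrow> v\<in>S \<Longrightarrow> mm S B (mpow S A k) u v = mm S (mpow S A k) B u v"
proof (induction k arbitrary: u v)
  case 0 thus ?case using fin by (simp add: mm_I_left mm_I_right)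
next
  case (Suc k)
  have "mm S B (mpow S A (Suc k)) u v = mm S B (mm S A (mpow S A k)) u v"
    by (rule mm_cong) (simp_all only: mpow_Suc_mm)
  also have "\<dots> = mm S (mm S B A) (mpow S A k) u v" by (simp add: mm_assoc fin)
  also have "\<dots> = mm S (mm S A B) (mpow S A k) u v" by (rule mm_cong) (use C Suc.prems in auto)
  also have "\<dots> = mm S A (mm S B (mpow S A k)) u v" by (simp add: mm_assoc fin)
  also have "\<dots> = mm S A (mm S (mpow S A k) B) u v" by (rule mm_cong) (use Suc.IH Suc.prems in auto)
  also have "\<dots> = mm S (mm S A (mpow S A k)) B u v" by (simp add: mm_assoc fin)
  also have "\<dots> = mm S (mpow S A (Suc k)) B u v" by (rule mm_cong) (simp_all only: mpow_Suc_mm)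
  finally show ?case .
qed

lemma pascal_sum:
  fixes X :: "nat \<Rightarrow> nat \<Rightarrow> real"
  shows "(\<Sum>k\<le>n. real (n choose k) * (X (Suc k) (n-k) + X k (Suc (n-k)))) =
         (\<Sum>k\<le>Suc n. real (Suc n choose k) * X k (Suc n - k))"
proof -
  define f where "f k = X k (Suc n - k)" for k
  have L: "(\<Sum>k\<le>n. real (n choose k) * (X (Suc k) (n-k) + X k (Suc (n-k)))) =
        (\<Sum>k\<le>n. real (n choose k) * f (Suc k)) + (\<Sum>k\<le>n. real (n choose k) * f k)"
    unfolding f_def by (auto simp: sum.distrib[symmetric] algebra_simps Suc_diff_le intro!: sum.cong)
  have R: "(\<Sum>k\<le>Suc n. real (Suc n choose k) * f k) =
        f 0 + (\<Sum>k\<le>n. real (n choose k) * f (Suc k)) + (\<Sum>k\<le>n. real (n choose Suc k) * f (Suc k))"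
  proof -
    have "(\<Sum>k\<le>Suc n. real (Suc n choose k) * f k) = real (Suc n choose 0) * f 0 + (\<Sum>k\<le>n. real (Suc n choose Suc k) * f (Suc k))"
      by (simp only: sum.atMost_Suc_shift)
    also have "\<dots> = f 0 + (\<Sum>k\<le>n. real (n choose k) * f (Suc k) + real (n choose Suc k) * f (Suc k))"
      by (simp only: binomial_Suc_Suc of_nat_add distrib_right binomial_n_0 of_nat_1 mult_1)
    finally show ?thesis by (simp only: sum.distrib add.assoc)
  qed
  have "(\<Sum>k\<le>n. real (n choose k) * f k) = (\<Sum>k\<le>Suc n. real (n choose k) * f k)"
    by simp
  also have "\<dots> = f 0 + (\<Sum>k\<le>n. real (n choose Suc k) * f (Suc k))"
    by (simp only: sum.atMost_Suc_shift binomial_n_0 of_nat_1 mult_1)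
  finally show ?thesis using L R unfolding f_def by simp
qed

lemma mpow_add_binomial:
  assumes fin: "finite S" and C: "\<And>u v. u\<in>S \<Longrightarrow> v\<in>S \<Longrightarrow> mm S A B u v = mm S B A u v"
  shows "x\<in>S \<Longrightarrow> y\<in>S \<Longrightarrow> mpow S (\<lambda>u v. A u v + B u v) n x y =
     (\<Sum>k\<le>n. real (n choose k) * mm S (mpow S A k) (mpow S B (n-k)) x y)"
proof (induction n arbitrary: x)
  case 0 thus ?case using fin by (simp add: mm_I_left)
next
  case (Suc n)
  define X where "X k m = mm S (mpow S A k) (mpow S B m) x y" for k m
  have "mpow S (\<lambda>u v. A u v + B u v) (Suc n) x y =
     (\<Sum>z\<in>S. (A x z + B x z) * (\<Sum>k\<le>n. real (n choose k) * mm S (mpow S A k) (mpow S B (n-k)) z y))"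
    using Suc.IH Suc.prems by simp
  also have "\<dots> = (\<Sum>k\<le>n. real (n choose k) * (mm S A (mm S (mpow S A k) (mpow S B (n-k))) x y
                                              + mm S B (mm S (mpow S A k) (mpow S B (n-k))) x y))"
  proof -
    define M where "M k = mm S (mpow S A k) (mpow S B (n-k))" for k
    have "(\<Sum>z\<in>S. (A x z + B x z) * (\<Sum>k\<le>n. real (n choose k) * M k z y))
       = (\<Sum>z\<in>S. \<Sum>k\<le>n. (A x z + B x z) * (real (n choose k) * M k z y))"
      by (simp add: sum_distrib_left)
    also have "\<dots> = (\<Sum>k\<le>n. \<Sum>z\<in>S. (A x z + B x z) * (real (n choose k) * M k z y))"
      by (rule sum.swap)
    also have "\<dots> = (\<Sum>k\<le>n. real (n choose k) * (mm S A (M k) x y + mm S B (M k) x y))"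
      unfolding mm_def by (intro sum.cong refl) (simp add: sum_distrib_left sum.distrib[symmetric] algebra_simps)
    finally show ?thesis unfolding M_def .
  qed
  also have "\<dots> = (\<Sum>k\<le>n. real (n choose k) * (X (Suc k) (n-k) + X k (Suc (n-k))))"
  proof (rule sum.cong[OF refl])
    fix k assume "k \<in> {..n}"
    have 1: "mm S A (mm S (mpow S A k) (mpow S B (n-k))) x y = X (Suc k) (n-k)"
      unfolding X_def
      by (simp only: mm_assoc[OF fin, symmetric]) (rule mm_cong, simp_all only: mpow_Suc_mm)
    have "mm S B (mm S (mpow S A k) (mpow S B (n-k))) x y = mm S (mm S B (mpow S A k)) (mpow S B (n-k)) x y"
      by (simp only: mm_assoc[OF fin])
    also have "\<dots> = mm S (mm S (mpow S A k) B) (mpow S B (n-k)) x y"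
      by (rule mm_cong) (use mm_commute_pow[OF fin C] Suc.prems in auto)
    also have "\<dots> = mm S (mpow S A k) (mm S B (mpow S B (n-k))) x y"
      by (simp only: mm_assoc[OF fin])
    also have "\<dots> = X k (Suc (n-k))"
      unfolding X_def by (rule mm_cong) (simp_all only: mpow_Suc_mm)
    finally show "real (n choose k) * (mm S A (mm S (mpow S A k) (mpow S B (n-k))) x y
                                              + mm S B (mm S (mpow S A k) (mpow S B (n-k))) x y)
         = real (n choose k) * (X (Suc k) (n-k) + X k (Suc (n-k)))" using 1 by simp
  qed
  also have "\<dots> = (\<Sum>k\<le>Suc n. real (Suc n choose k) * X k (Suc n - k))"
    by (rule pascal_sum)
  finally show ?case unfolding X_def .
qed

lemma ex_add:
  assumes fin: "finite S" and C: "\<And>u v. u\<in>S \<Longrightarrow> v\<in>S \<Longrightarrow> mm S A B u v = mm S B A u v"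
    and xy: "x \<in> S" "y \<in> S"
  shows "ex S (\<lambda>u v. A u v + B u v) x y = mm S (ex S A) (ex S B) x y"
proof -
  have cp: "(\<lambda>n. \<Sum>i\<le>n. (mpow S A i x z / fact i) * (mpow S B (n-i) z y / fact (n-i))) sums
            (ex S A x z * ex S B z y)" if z: "z \<in> S" for z
    unfolding ex_def
    by (rule Cauchy_product_sums[OF ex_summable_abs[OF fin xy(1)] ex_summable_abs[OF fin z]])
  have "(\<lambda>n. \<Sum>z\<in>S. \<Sum>i\<le>n. (mpow S A i x z / fact i) * (mpow S B (n-i) z y / fact (n-i))) sums
        (\<Sum>z\<in>S. ex S A x z * ex S B z y)"
    by (rule sums_sum) (rule cp)
  moreover have "(\<Sum>z\<in>S. \<Sum>i\<le>n. (mpow S A i x z / fact i) * (mpow S B (n-i) z y / fact (n-i)))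
      = mpow S (\<lambda>u v. A u v + B u v) n x y / fact n" for n
  proof -
    have "(\<Sum>z\<in>S. \<Sum>i\<le>n. (mpow S A i x z / fact i) * (mpow S B (n-i) z y / fact (n-i)))
       = (\<Sum>i\<le>n. \<Sum>z\<in>S. (mpow S A i x z / fact i) * (mpow S B (n-i) z y / fact (n-i)))"
      by (rule sum.swap)
    also have "\<dots> = (\<Sum>i\<le>n. mm S (mpow S A i) (mpow S B (n-i)) x y / (fact i * fact (n-i)))"
      unfolding mm_def by (intro sum.cong refl) (simp add: sum_divide_distrib)
    also have "\<dots> = (\<Sum>i\<le>n. real (n choose i) * mm S (mpow S A i) (mpow S B (n-i)) x y / fact n)"
    proof (intro sum.cong refl)
      fix i assume "i \<in> {..n}"
      then have "real (n choose i) = fact n / (fact i * fact (n-i))" by (simp add: binomial_fact)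
      then show "mm S (mpow S A i) (mpow S B (n-i)) x y / (fact i * fact (n-i)) =
          real (n choose i) * mm S (mpow S A i) (mpow S B (n-i)) x y / fact n"
        by simp
    qed
    also have "\<dots> = mpow S (\<lambda>u v. A u v + B u v) n x y / fact n"
      by (simp add: mpow_add_binomial[OF fin C xy] sum_divide_distrib)
    finally show ?thesis .
  qed
  ultimately have "(\<lambda>n. mpow S (\<lambda>u v. A u v + B u v) n x y / fact n) sums mm S (ex S A) (ex S B) x y"
    unfolding mm_def by simp
  then show ?thesis unfolding ex_def[of S "\<lambda>u v. A u v + B u v"] by (rule sums_unique[symmetric])
qed

abbreviation Id1 :: "'a \<Rightarrow> 'a \<Rightarrow> real" where "Id1 \<equiv> (\<lambda>a b. if a = b then 1 else 0)"

lemma mpow_Id1: "finite S \<Longrightarrow> x \<in> S \<Longrightarrow> mpow S Id1 k x y = (if x = y then 1 else 0)"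
proof (induction k arbitrary: x)
  case 0 then show ?case by simp
next
  case (Suc k)
  have "mpow S Id1 (Suc k) x y = mm S Id1 (mpow S Id1 k) x y" by (rule mpow_Suc_mm)
  also have "\<dots> = mpow S Id1 k x y" by (rule mm_I_left) (use Suc.prems in auto)
  finally show ?case using Suc by simp
qed

lemma ex_sId1:
  assumes "finite S" "x \<in> S"
  shows "ex S (\<lambda>u v. s * Id1 u v) x y = exp s * (if x = y then 1 else 0)"
proof -
  have "(\<lambda>k. mpow S (\<lambda>u v. s * Id1 u v) k x y / fact k) = (\<lambda>k. (if x = y then 1 else 0) * (s ^ k /\<^sub>R fact k))"
    using assms by (auto simp: mpow_scale mpow_Id1 divide_inverse scaleR_conv_of_real)
  moreover have "(\<lambda>k. (if x = y then 1 else 0) * (s ^ k /\<^sub>R fact k)) sums ((if x = y then 1 else 0) * exp s)"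
    by (rule sums_mult[OF exp_converges])
  ultimately show ?thesis unfolding ex_def by (simp add: sums_iff mult.commute)
qed

lemma mm_sId1_right: "finite S \<Longrightarrow> v \<in> S \<Longrightarrow> mm S A (\<lambda>a b. s * Id1 a b) u v = s * A u v"
proof -
  assume "finite S" "v \<in> S"
  have "mm S A (\<lambda>a b. s * Id1 a b) u v = (\<Sum>z\<in>S. if z = v then s * A u v else 0)"
    unfolding mm_def by (rule sum.cong) auto
  then show ?thesis using \<open>finite S\<close> \<open>v \<in> S\<close> by simp
qed

lemma mm_sId1_left: "finite S \<Longrightarrow> u \<in> S \<Longrightarrow> mm S (\<lambda>a b. s * Id1 a b) A u v = s * A u v"
proof -
  assume "finite S" "u \<in> S"
  have "mm S (\<lambda>a b. s * Id1 a b) A u v = (\<Sum>z\<in>S. if u = z then s * A u v else 0)"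
    unfolding mm_def by (rule sum.cong) auto
  then show ?thesis using \<open>finite S\<close> \<open>u \<in> S\<close> by simp
qed

lemma mpow_nonneg:
  assumes "\<And>u v. u \<in> S \<Longrightarrow> v \<in> S \<Longrightarrow> 0 \<le> A u v" "x \<in> S" "y \<in> S"
  shows "0 \<le> mpow S A k x y"
  using assms(2)
proof (induction k arbitrary: x)
  case 0 then show ?case by simp
next
  case (Suc k) then show ?case by (simp add: sum_nonneg assms(1))
qed

lemma ex_nonneg:
  assumes "finite S" "\<And>u v. u \<in> S \<Longrightarrow> v \<in> S \<Longrightarrow> 0 \<le> A u v" "x \<in> S" "y \<in> S"
  shows "0 \<le> ex S A x y"
  unfolding ex_def
  by (rule suminf_nonneg[OF ex_summable[OF assms(1,3)]]) (simp add: mpow_nonneg[OF assms(2-4)])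

lemma heat_shift:
  assumes fin: "finite S" and xy: "x \<in> S" "y \<in> S"
  shows "heat S L t x y = ex S (\<lambda>u v. t * (L u v + c * Id1 u v)) x y * exp (- (t * c))"
proof -
  let ?A = "\<lambda>u v. t * (L u v + c * Id1 u v)" and ?B = "\<lambda>u v. (- (t * c)) * Id1 u v"
  have "heat S L t x y = ex S (\<lambda>u v. ?A u v + ?B u v) x y"
    unfolding heat_ex by (rule arg_cong[where f="\<lambda>A. ex S A x y"]) (auto simp: algebra_simps)
  also have "\<dots> = mm S (ex S ?A) (ex S ?B) x y"
  proof (rule ex_add[OF fin _ xy])
    fix u v assume uv: "u \<in> S" "v \<in> S"
    have "mm S ?A ?B u v = (- (t * c)) * ?A u v" by (rule mm_sId1_right[OF fin uv(2)])
    moreover have "mm S ?B ?A u v = (- (t * c)) * ?A u v" by (rule mm_sId1_left[OF fin uv(1)])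
    ultimately show "mm S ?A ?B u v = mm S ?B ?A u v" by simp
  qed
  also have "\<dots> = mm S (ex S ?A) (\<lambda>a b. exp (- (t * c)) * Id1 a b) x y"
    by (rule mm_cong) (simp_all only: ex_sId1[OF fin])
  also have "\<dots> = ex S ?A x y * exp (- (t * c))"
    using mm_sId1_right[OF fin xy(2)] by simp
  finally show ?thesis .
qed

lemma generatorD:
  assumes "generator S L"
  shows "finite S" "S \<noteq> {}" "\<And>x y. x\<in>S \<Longrightarrow> y\<in>S \<Longrightarrow> x \<noteq> y \<Longrightarrow> 0 \<le> L x y"
    "\<And>x. x \<in> S \<Longrightarrow> (\<Sum>y\<in>S. L x y) = 0"
  using assms unfolding generator_def by auto

lemma shifted_nonneg:
  assumes g: "generator S L" and t: "0 \<le> t" and c: "(\<Sum>u\<in>S. \<bar>L u u\<bar>) \<le> c"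
    and uv: "u \<in> S" "v \<in> S"
  shows "0 \<le> t * (L u v + c * Id1 u v)"
proof (cases "u = v")
  case True
  have "\<bar>L u u\<bar> \<le> (\<Sum>u\<in>S. \<bar>L u u\<bar>)"
    by (rule member_le_sum[OF uv(1)]) (auto simp: generatorD(1)[OF g])
  then show ?thesis using True c t by (auto intro!: mult_nonneg_nonneg)
next
  case False then show ?thesis using generatorD(3)[OF g uv] t by simp
qed

lemma heat_nonneg:
  assumes g: "generator S L" and t: "0 \<le> t" and xy: "x \<in> S" "y \<in> S"
  shows "0 \<le> heat S L t x y"
proof -
  have fin: "finite S" by (rule generatorD(1)[OF g])
  have "0 \<le> ex S (\<lambda>u v. t * (L u v + (\<Sum>u\<in>S. \<bar>L u u\<bar>) * Id1 u v)) x y"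
    by (rule ex_nonneg[OF fin _ xy]) (rule shifted_nonneg[OF g t order_refl])
  then show ?thesis unfolding heat_shift[OF fin xy, of L t "\<Sum>u\<in>S. \<bar>L u u\<bar>"] by simp
qed

lemma mpow_rowsum:
  assumes fin: "finite S" and R: "\<And>u. u \<in> S \<Longrightarrow> (\<Sum>v\<in>S. A u v) = 0" and x: "x \<in> S"
  shows "(\<Sum>y\<in>S. mpow S A k x y) = (if k = 0 then 1 else 0)"
  using x
proof (induction k arbitrary: x)
  case 0 then show ?case using fin by simp
next
  case (Suc k)
  have "(\<Sum>y\<in>S. mpow S A (Suc k) x y) = (\<Sum>z\<in>S. A x z * (\<Sum>y\<in>S. mpow S A k z y))"
  proof -
    have "(\<Sum>y\<in>S. mpow S A (Suc k) x y) = (\<Sum>y\<in>S. \<Sum>z\<in>S. A x z * mpow S A k z y)" by simp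
    also have "\<dots> = (\<Sum>z\<in>S. \<Sum>y\<in>S. A x z * mpow S A k z y)" by (rule sum.swap)
    finally show ?thesis by (simp add: sum_distrib_left)
  qed
  also have "\<dots> = (\<Sum>z\<in>S. A x z * (if k = 0 then 1 else 0))"
    by (intro sum.cong refl) (simp add: Suc.IH)
  also have "\<dots> = 0" using R[OF Suc.prems] by (simp add: sum_distrib_right[symmetric])
  finally show ?case by simp
qed

lemma ex_rowsum:
  assumes fin: "finite S" and R: "\<And>u. u \<in> S \<Longrightarrow> (\<Sum>v\<in>S. A u v) = 0" and x: "x \<in> S"
  shows "(\<Sum>y\<in>S. ex S A x y) = 1"
proof -
  have "(\<lambda>k. \<Sum>y\<in>S. mpow S A k x y / fact k) sums (\<Sum>y\<in>S. ex S A x y)"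
    unfolding ex_def by (rule sums_sum) (rule summable_sums[OF ex_summable[OF fin x]])
  moreover have "(\<lambda>k. \<Sum>y\<in>S. mpow S A k x y / fact k) = (\<lambda>k. if k = 0 then 1 else 0)"
    by (auto simp: sum_divide_distrib[symmetric] mpow_rowsum[OF fin R x])
  moreover have "(\<lambda>k::nat. if k = 0 then (1::real) else 0) sums 1"
    using sums_single[of 0 "\<lambda>_. 1::real"] by simp
  ultimately show ?thesis using sums_unique2 by metis
qed

lemma mpow_stat:
  assumes fin: "finite S" and P: "\<And>v. v \<in> S \<Longrightarrow> (\<Sum>u\<in>S. p u * A u v) = 0" and y: "y \<in> S"
  shows "(\<Sum>x\<in>S. p x * mpow S A k x y) = (if k = 0 then p y else 0)"
proof (cases k)
  case 0 then show ?thesis using fin y by (simp add: if10_mult cong: if_cong)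
next
  case (Suc m)
  have "(\<Sum>x\<in>S. p x * mpow S A (Suc m) x y) = (\<Sum>x\<in>S. \<Sum>z\<in>S. p x * A x z * mpow S A m z y)"
    by (simp add: sum_distrib_left mult.assoc)
  also have "\<dots> = (\<Sum>z\<in>S. \<Sum>x\<in>S. p x * A x z * mpow S A m z y)" by (rule sum.swap)
  also have "\<dots> = (\<Sum>z\<in>S. (\<Sum>x\<in>S. p x * A x z) * mpow S A m z y)"
    by (simp add: sum_distrib_right)
  also have "\<dots> = 0" by (simp add: P)
  finally show ?thesis using Suc by simp
qed

lemma ex_stat:
  assumes fin: "finite S" and P: "\<And>v. v \<in> S \<Longrightarrow> (\<Sum>u\<in>S. p u * A u v) = 0" and y: "y \<in> S"
  shows "(\<Sum>x\<in>S. p x * ex S A x y) = p y"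
proof -
  have "(\<lambda>k. \<Sum>x\<in>S. p x * (mpow S A k x y / fact k)) sums (\<Sum>x\<in>S. p x * ex S A x y)"
    unfolding ex_def
    by (rule sums_sum, rule sums_mult, rule summable_sums[OF ex_summable[OF fin]]) simp
  moreover have "(\<lambda>k. \<Sum>x\<in>S. p x * (mpow S A k x y / fact k)) = (\<lambda>k. if k = 0 then p y else 0)"
  proof
    fix k
    have "(\<Sum>x\<in>S. p x * (mpow S A k x y / fact k)) = (\<Sum>x\<in>S. p x * mpow S A k x y) / fact k"
      by (simp add: sum_divide_distrib)
    then show "(\<Sum>x\<in>S. p x * (mpow S A k x y / fact k)) = (if k = 0 then p y else 0)"
      by (simp add: mpow_stat[OF fin P y])
  qed
  moreover have "(\<lambda>k::nat. if k = 0 then p y else 0) sums p y"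
    using sums_single[of 0 "\<lambda>_. p y"] by simp
  ultimately show ?thesis using sums_unique2 by metis
qed

lemma heat_rowsum:
  assumes g: "generator S L" and x: "x \<in> S"
  shows "(\<Sum>y\<in>S. heat S L t x y) = 1"
  unfolding heat_ex
  by (rule ex_rowsum[OF generatorD(1)[OF g] _ x]) (simp add: sum_distrib_left[symmetric] generatorD(4)[OF g])

lemma heat_stat:
  assumes g: "generator S L" and st: "stationary S L \<pi>" and y: "y \<in> S"
  shows "(\<Sum>x\<in>S. \<pi> x * heat S L t x y) = \<pi> y"
  unfolding heat_ex
proof (rule ex_stat[OF generatorD(1)[OF g] _ y])
  fix v assume "v \<in> S"
  then have "(\<Sum>u\<in>S. \<pi> u * L u v) = 0" using st unfolding stationary_def by auto
  then show "(\<Sum>u\<in>S. \<pi> u * (t * L u v)) = 0"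
    by (simp add: mult.left_commute[of _ t] sum_distrib_left[symmetric])
qed

lemma heat_semigroup:
  assumes g: "generator S L" and xy: "x \<in> S" "y \<in> S"
  shows "heat S L (t + s) x y = (\<Sum>z\<in>S. heat S L t x z * heat S L s z y)"
proof -
  have fin: "finite S" by (rule generatorD(1)[OF g])
  have "heat S L (t + s) x y = ex S (\<lambda>u v. t * L u v + s * L u v) x y"
    unfolding heat_ex by (simp add: distrib_right)
  also have "\<dots> = mm S (ex S (\<lambda>u v. t * L u v)) (ex S (\<lambda>u v. s * L u v)) x y"
    by (rule ex_add[OF fin _ xy]) (simp add: mm_def sum_distrib_left mult_ac)
  finally show ?thesis unfolding mm_def heat_ex .
qed

lemma path_pos:
  assumes fin: "finite S" and nn: "\<And>u v. u \<in> S \<Longrightarrow> v \<in> S \<Longrightarrow> 0 \<le> A u v"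
    and pos: "\<And>u v. u \<in> S \<Longrightarrow> v \<in> S \<Longrightarrow> u \<noteq> v \<Longrightarrow> 0 < L u v \<Longrightarrow> 0 < A u v"
    and path: "(x, y) \<in> {(u, v). u \<in> S \<and> v \<in> S \<and> u \<noteq> v \<and> 0 < L u v}\<^sup>*"
    and xy: "x \<in> S" "y \<in> S"
  shows "\<exists>k. 0 < mpow S A k x y"
  using path xy
proof (induction rule: converse_rtrancl_induct)
  case base then show ?case by (intro exI[of _ 0]) simp
next
  case (step x w)
  then have xw: "x \<in> S" "w \<in> S" "x \<noteq> w" "0 < L x w" by auto
  obtain k where k: "0 < mpow S A k w y" using step by auto
  have "A x w * mpow S A k w y \<le> (\<Sum>z\<in>S. A x z * mpow S A k z y)"
    by (rule member_le_sum[OF xw(2) _ fin])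
       (auto intro!: mult_nonneg_nonneg nn mpow_nonneg[OF nn] xw step.prems)
  moreover have "0 < A x w * mpow S A k w y" using pos[OF xw] k by simp
  ultimately have "0 < mpow S A (Suc k) x y" by simp
  then show ?case by blast
qed

lemma heat_pos:
  assumes fc: "finite_chain \<mu> S L \<pi>" and xy: "x \<in> S" "y \<in> S"
  shows "0 < heat S L 1 x y"
proof -
  have g: "generator S L" and irr: "irreducible_gen S L" using fc unfolding finite_chain_def by auto
  have fin: "finite S" by (rule generatorD(1)[OF g])
  define c where "c = (\<Sum>u\<in>S. \<bar>L u u\<bar>) + 1"
  define A where "A = (\<lambda>u v. 1 * (L u v + c * Id1 u v))"
  have nn: "0 \<le> A u v" if "u \<in> S" "v \<in> S" for u v
    unfolding A_def by (rule shifted_nonneg[OF g _ _ that]) (auto simp: c_def)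
  have "\<exists>k. 0 < mpow S A k x y"
  proof (rule path_pos[OF fin nn])
    show "(x, y) \<in> {(u, v). u \<in> S \<and> v \<in> S \<and> u \<noteq> v \<and> 0 < L u v}\<^sup>*"
      using irr xy unfolding irreducible_gen_def by blast
  qed (use xy in \<open>auto simp: A_def\<close>)
  then obtain k where k: "0 < mpow S A k x y" by blast
  have "(\<Sum>j\<in>{k}. mpow S A j x y / fact j) \<le> ex S A x y"
    unfolding ex_def
  proof (rule sum_le_suminf[OF ex_summable[OF fin xy(1)]])
    fix n show "0 \<le> mpow S A n x y / fact n"
      using mpow_nonneg[of S A, OF nn xy] by simp
  qed simp
  moreover have "0 < mpow S A k x y / fact k" using k by simp
  ultimately have "0 < ex S A x y" by simp
  then show ?thesis unfolding heat_shift[OF fin xy, of L 1 c] A_def by simp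
qed

lemma pi_pos:
  assumes fc: "finite_chain \<mu> S L \<pi>" and y: "y \<in> S"
  shows "0 < \<pi> y"
proof -
  have g: "generator S L" and st: "stationary S L \<pi>" using fc unfolding finite_chain_def by auto
  have fin: "finite S" by (rule generatorD(1)[OF g])
  have pd: "\<And>x. x \<in> S \<Longrightarrow> 0 \<le> \<pi> x" "(\<Sum>x\<in>S. \<pi> x) = 1"
    using st unfolding stationary_def prob_distr_def by auto
  obtain w where w: "w \<in> S" "0 < \<pi> w"
  proof (rule ccontr)
    assume "\<not> thesis"
    then have "\<forall>x\<in>S. \<pi> x \<le> 0" using that by force
    then have "(\<Sum>x\<in>S. \<pi> x) \<le> 0" by (simp add: sum_nonpos)
    with pd show False by simp
  qed
  have "\<pi> w * heat S L 1 w y \<le> (\<Sum>x\<in>S. \<pi> x * heat S L 1 x y)"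
    by (rule member_le_sum[OF w(1) _ fin])
       (auto intro!: mult_nonneg_nonneg pd heat_nonneg[OF g] y)
  moreover have "0 < \<pi> w * heat S L 1 w y" using w heat_pos[OF fc w(1) y] by simp
  ultimately show ?thesis using heat_stat[OF g st y] by simp
qed

lemma jensen:
  fixes \<pi> \<nu> :: "_ \<Rightarrow> real" and Q :: "_ \<Rightarrow> _ \<Rightarrow> real"
  assumes fin: "finite S" and pos: "\<And>x. x \<in> S \<Longrightarrow> 0 < \<pi> x"
    and Qnn: "\<And>x y. x \<in> S \<Longrightarrow> y \<in> S \<Longrightarrow> 0 \<le> Q x y"
    and rows: "\<And>x. x \<in> S \<Longrightarrow> (\<Sum>y\<in>S. Q x y) = r"
    and cols: "\<And>y. y \<in> S \<Longrightarrow> (\<Sum>x\<in>S. \<pi> x * Q x y) = c * \<pi> y"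
  shows "(\<Sum>y\<in>S. (\<Sum>x\<in>S. \<nu> x * Q x y)\<^sup>2 / \<pi> y) \<le> r * c * (\<Sum>x\<in>S. (\<nu> x)\<^sup>2 / \<pi> x)"
proof -
  have per: "(\<Sum>x\<in>S. \<nu> x * Q x y)\<^sup>2 / \<pi> y \<le> c * (\<Sum>x\<in>S. (\<nu> x)\<^sup>2 * Q x y / \<pi> x)" if y: "y \<in> S" for y
  proof -
    define a where "a x = \<nu> x * sqrt (Q x y / \<pi> x)" for x
    define b where "b x = sqrt (\<pi> x * Q x y)" for x
    have ab: "a x * b x = \<nu> x * Q x y" if "x \<in> S" for x
    proof -
      have "sqrt (Q x y / \<pi> x) * sqrt (\<pi> x * Q x y) = sqrt ((Q x y)\<^sup>2)"
        using pos[OF that] by (simp add: real_sqrt_mult[symmetric] power2_eq_square)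
      also have "\<dots> = Q x y" using Qnn[OF that y] by simp
      finally show ?thesis unfolding a_def b_def by (simp add: mult.assoc)
    qed
    have a2: "(a x)\<^sup>2 = (\<nu> x)\<^sup>2 * Q x y / \<pi> x" if "x \<in> S" for x
      using pos[OF that] Qnn[OF that y] unfolding a_def by (simp add: power_mult_distrib)
    have b2: "(b x)\<^sup>2 = \<pi> x * Q x y" if "x \<in> S" for x
      using pos[OF that] Qnn[OF that y] unfolding b_def by simp
    have "(\<Sum>x\<in>S. \<nu> x * Q x y)\<^sup>2 = (\<Sum>x\<in>S. a x * b x)\<^sup>2" by (simp add: ab)
    also have "\<dots> \<le> (\<Sum>x\<in>S. (a x)\<^sup>2) * (\<Sum>x\<in>S. (b x)\<^sup>2)" by (rule Cauchy_Schwarz_ineq_sum)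
    also have "\<dots> = (\<Sum>x\<in>S. (\<nu> x)\<^sup>2 * Q x y / \<pi> x) * (c * \<pi> y)"
      by (simp add: a2 b2 cols[OF y])
    finally have "(\<Sum>x\<in>S. \<nu> x * Q x y)\<^sup>2 \<le> (\<Sum>x\<in>S. (\<nu> x)\<^sup>2 * Q x y / \<pi> x) * (c * \<pi> y)" .
    then have "(\<Sum>x\<in>S. \<nu> x * Q x y)\<^sup>2 / \<pi> y \<le> (\<Sum>x\<in>S. (\<nu> x)\<^sup>2 * Q x y / \<pi> x) * (c * \<pi> y) / \<pi> y"
      by (rule divide_right_mono) (use pos[OF y] in simp)
    also have "\<dots> = c * (\<Sum>x\<in>S. (\<nu> x)\<^sup>2 * Q x y / \<pi> x)" using pos[OF y] by simp
    finally show ?thesis .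
  qed
  have "(\<Sum>y\<in>S. (\<Sum>x\<in>S. \<nu> x * Q x y)\<^sup>2 / \<pi> y) \<le> (\<Sum>y\<in>S. c * (\<Sum>x\<in>S. (\<nu> x)\<^sup>2 * Q x y / \<pi> x))"
    by (rule sum_mono) (rule per)
  also have "\<dots> = c * (\<Sum>y\<in>S. \<Sum>x\<in>S. (\<nu> x)\<^sup>2 / \<pi> x * Q x y)"
    by (simp add: sum_distrib_left[symmetric])
  also have "\<dots> = c * (\<Sum>x\<in>S. \<Sum>y\<in>S. (\<nu> x)\<^sup>2 / \<pi> x * Q x y)"
    by (subst sum.swap) (rule refl)
  also have "\<dots> = c * (\<Sum>x\<in>S. (\<nu> x)\<^sup>2 / \<pi> x * r)"
    by (intro arg_cong[where f="\<lambda>z. c * z"] sum.cong refl)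
       (simp only: sum_distrib_left[symmetric] rows)
  also have "\<dots> = r * c * (\<Sum>x\<in>S. (\<nu> x)\<^sup>2 / \<pi> x)"
  proof -
    have "(\<Sum>x\<in>S. (\<nu> x)\<^sup>2 / \<pi> x * r) = (\<Sum>x\<in>S. (\<nu> x)\<^sup>2 / \<pi> x) * r"
      by (rule sum_distrib_right[symmetric])
    then show ?thesis by simp
  qed
  finally show ?thesis .
qed

definition nu :: "'a set \<Rightarrow> ('a \<Rightarrow> 'a \<Rightarrow> real) \<Rightarrow> ('a \<Rightarrow> real) \<Rightarrow> real \<Rightarrow> 'a \<Rightarrow> real" where
  "nu S L \<mu> t y = (\<Sum>x\<in>S. \<mu> x * heat S L t x y)"

definition EE :: "'a set \<Rightarrow> ('a \<Rightarrow> 'a \<Rightarrow> real) \<Rightarrow> ('a \<Rightarrow> real) \<Rightarrow> ('a \<Rightarrow> real) \<Rightarrow> real \<Rightarrow> real" where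
  "EE S L \<pi> \<mu> t = (\<Sum>y\<in>S. (nu S L \<mu> t y - \<pi> y)\<^sup>2 / \<pi> y)"

lemma fcD:
  assumes "finite_chain \<mu> S L \<pi>"
  shows "generator S L" "stationary S L \<pi>" "finite S" "\<And>x. x \<in> S \<Longrightarrow> 0 \<le> \<mu> x"
    "(\<Sum>x\<in>S. \<mu> x) = 1" "\<And>x. x \<in> S \<Longrightarrow> 0 \<le> \<pi> x" "(\<Sum>x\<in>S. \<pi> x) = 1"
  using assms unfolding finite_chain_def prob_distr_def stationary_def generator_def by auto

lemma EE_nonneg: "finite_chain \<mu> S L \<pi> \<Longrightarrow> 0 \<le> EE S L \<pi> \<mu> t"
  unfolding EE_def by (intro sum_nonneg divide_nonneg_nonneg) (auto dest: pi_pos)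

lemma d2_EE:
  assumes fc: "finite_chain \<mu> S L \<pi>"
  shows "d2 S L \<pi> \<mu> t = sqrt (EE S L \<pi> \<mu> t)"
proof -
  have "(\<Sum>y\<in>S. ((\<Sum>x\<in>S. \<mu> x * heat S L t x y) / \<pi> y - 1)\<^sup>2 * \<pi> y) = EE S L \<pi> \<mu> t"
    unfolding EE_def nu_def
  proof (rule sum.cong[OF refl])
    fix y assume "y \<in> S"
    then have p: "0 < \<pi> y" by (rule pi_pos[OF fc])
    show "((\<Sum>x\<in>S. \<mu> x * heat S L t x y) / \<pi> y - 1)\<^sup>2 * \<pi> y =
          ((\<Sum>x\<in>S. \<mu> x * heat S L t x y) - \<pi> y)\<^sup>2 / \<pi> y"
      using p by (simp add: field_simps power2_eq_square)
  qed
  then show ?thesis unfolding d2_def by simp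
qed

lemma d2_sq: "finite_chain \<mu> S L \<pi> \<Longrightarrow> (d2 S L \<pi> \<mu> t)\<^sup>2 = EE S L \<pi> \<mu> t"
  by (simp add: d2_EE EE_nonneg)

lemma nu_sum:
  assumes fc: "finite_chain \<mu> S L \<pi>"
  shows "(\<Sum>y\<in>S. nu S L \<mu> t y) = 1"
proof -
  have "(\<Sum>y\<in>S. nu S L \<mu> t y) = (\<Sum>y\<in>S. \<Sum>x\<in>S. \<mu> x * heat S L t x y)" unfolding nu_def ..
  also have "\<dots> = (\<Sum>x\<in>S. \<Sum>y\<in>S. \<mu> x * heat S L t x y)" by (rule sum.swap)
  also have "\<dots> = (\<Sum>x\<in>S. \<mu> x)"
    by (intro sum.cong refl) (simp add: sum_distrib_left[symmetric] heat_rowsum[OF fcD(1)[OF fc]])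
  finally show ?thesis using fcD(5)[OF fc] by simp
qed

lemma nu_semi:
  assumes fc: "finite_chain \<mu> S L \<pi>" and y: "y \<in> S"
  shows "nu S L \<mu> (t + s) y = (\<Sum>z\<in>S. nu S L \<mu> t z * heat S L s z y)"
proof -
  have "nu S L \<mu> (t + s) y = (\<Sum>x\<in>S. \<Sum>z\<in>S. \<mu> x * heat S L t x z * heat S L s z y)"
    unfolding nu_def
    by (intro sum.cong refl) (simp add: heat_semigroup[OF fcD(1)[OF fc] _ y] sum_distrib_left mult.assoc)
  also have "\<dots> = (\<Sum>z\<in>S. \<Sum>x\<in>S. \<mu> x * heat S L t x z * heat S L s z y)" by (rule sum.swap)
  also have "\<dots> = (\<Sum>z\<in>S. nu S L \<mu> t z * heat S L s z y)"
    unfolding nu_def by (simp add: sum_distrib_right)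
  finally show ?thesis .
qed

lemma EE_step:
  assumes fc: "finite_chain \<mu> S L \<pi>"
    and Qnn: "\<And>x y. x \<in> S \<Longrightarrow> y \<in> S \<Longrightarrow> 0 \<le> Q x y"
    and rows: "\<And>x. x \<in> S \<Longrightarrow> (\<Sum>y\<in>S. Q x y) = r"
    and cols: "\<And>y. y \<in> S \<Longrightarrow> (\<Sum>x\<in>S. \<pi> x * Q x y) = c * \<pi> y"
    and rel: "\<And>y. y \<in> S \<Longrightarrow> nu S L \<mu> t' y - \<pi> y = (\<Sum>z\<in>S. (nu S L \<mu> t z - \<pi> z) * Q z y)"
  shows "EE S L \<pi> \<mu> t' \<le> r * c * EE S L \<pi> \<mu> t"
proof -
  have "EE S L \<pi> \<mu> t' = (\<Sum>y\<in>S. (\<Sum>z\<in>S. (nu S L \<mu> t z - \<pi> z) * Q z y)\<^sup>2 / \<pi> y)"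
    unfolding EE_def by (intro sum.cong refl) (simp add: rel)
  also have "\<dots> \<le> r * c * EE S L \<pi> \<mu> t"
    unfolding EE_def
    by (rule jensen[OF fcD(3)[OF fc] pi_pos[OF fc] Qnn rows cols])
  finally show ?thesis .
qed

lemma EE_mono:
  assumes fc: "finite_chain \<mu> S L \<pi>" and s: "0 \<le> s"
  shows "EE S L \<pi> \<mu> (t + s) \<le> EE S L \<pi> \<mu> t"
proof -
  have g: "generator S L" and st: "stationary S L \<pi>" using fcD[OF fc] by auto
  have "EE S L \<pi> \<mu> (t + s) \<le> 1 * 1 * EE S L \<pi> \<mu> t"
  proof (rule EE_step[OF fc, where Q="heat S L s" and r=1 and c=1])
    show "0 \<le> heat S L s x y" if "x \<in> S" "y \<in> S" for x y by (rule heat_nonneg[OF g s that])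
    show "(\<Sum>y\<in>S. heat S L s x y) = 1" if "x \<in> S" for x by (rule heat_rowsum[OF g that])
    show "(\<Sum>x\<in>S. \<pi> x * heat S L s x y) = 1 * \<pi> y" if "y \<in> S" for y
      using heat_stat[OF g st that] by simp
    show "nu S L \<mu> (t + s) y - \<pi> y = (\<Sum>z\<in>S. (nu S L \<mu> t z - \<pi> z) * heat S L s z y)" if "y \<in> S" for y
      using nu_semi[OF fc that, of t s] heat_stat[OF g st that, of s]
      by (simp add: left_diff_distrib sum_subtractf)
  qed
  then show ?thesis by simp
qed

lemma EE_contr:
  assumes fc: "finite_chain \<mu> S L \<pi>"
  shows "\<exists>q. 0 \<le> q \<and> q < 1 \<and> (\<forall>t. EE S L \<pi> \<mu> (t + 1) \<le> q * EE S L \<pi> \<mu> t)"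
proof -
  have g: "generator S L" and st: "stationary S L \<pi>" and fin: "finite S" and ne: "S \<noteq> {}"
    using fcD[OF fc] generatorD[OF fcD(1)[OF fc]] by auto
  define M where "M = (\<lambda>(x, y). heat S L 1 x y) ` (S \<times> S)"
  have Mfin: "finite M" and Mne: "M \<noteq> {}" using fin ne unfolding M_def by auto
  define m where "m = Min M"
  have mpos: "0 < m" unfolding m_def using Min_in[OF Mfin Mne] heat_pos[OF fc] by (auto simp: M_def)
  have mle: "m \<le> heat S L 1 x y" if "x \<in> S" "y \<in> S" for x y
    unfolding m_def by (rule Min_le[OF Mfin]) (use that in \<open>auto simp: M_def\<close>)
  have hle1: "heat S L 1 x y \<le> 1" if "x \<in> S" "y \<in> S" for x y
  proof -
    have "heat S L 1 x y \<le> (\<Sum>y\<in>S. heat S L 1 x y)"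
      by (rule member_le_sum[OF that(2) _ fin]) (auto intro: heat_nonneg[OF g _ that(1)])
    then show ?thesis using heat_rowsum[OF g that(1)] by simp
  qed
  have ple1: "\<pi> y \<le> 1" if "y \<in> S" for y
  proof -
    have "\<pi> y \<le> (\<Sum>y\<in>S. \<pi> y)" by (rule member_le_sum[OF that _ fin]) (auto intro: fcD(6)[OF fc])
    then show ?thesis using fcD(7)[OF fc] by simp
  qed
  obtain x0 where x0: "x0 \<in> S" using ne by auto
  define \<delta> where "\<delta> = m / 2"
  have d0: "0 < \<delta>" and d1: "\<delta> \<le> 1 / 2" using mpos mle[OF x0 x0] hle1[OF x0 x0] by (auto simp: \<delta>_def)
  define Q where "Q x y = heat S L 1 x y - \<delta> * \<pi> y" for x y
  have "EE S L \<pi> \<mu> (t + 1) \<le> (1 - \<delta>) * (1 - \<delta>) * EE S L \<pi> \<mu> t" for t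
  proof (rule EE_step[OF fc, where Q=Q and r="1-\<delta>" and c="1-\<delta>"])
    show "0 \<le> Q x y" if "x \<in> S" "y \<in> S" for x y
    proof -
      have "\<delta> * \<pi> y \<le> \<delta> * 1" using d0 ple1[OF that(2)] by (intro mult_left_mono) auto
      also have "\<dots> \<le> heat S L 1 x y" using mle[OF that] mpos by (simp add: \<delta>_def)
      finally show ?thesis unfolding Q_def by simp
    qed
    show "(\<Sum>y\<in>S. Q x y) = 1 - \<delta>" if "x \<in> S" for x
      unfolding Q_def using heat_rowsum[OF g that] fcD(7)[OF fc]
      by (simp add: sum_subtractf sum_distrib_left[symmetric])
    show "(\<Sum>x\<in>S. \<pi> x * Q x y) = (1 - \<delta>) * \<pi> y" if "y \<in> S" for y
    proof -
      have "(\<Sum>x\<in>S. \<pi> x * Q x y) = (\<Sum>x\<in>S. \<pi> x * heat S L 1 x y) - (\<Sum>x\<in>S. \<pi> x) * (\<delta> * \<pi> y)"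
        unfolding Q_def by (simp add: right_diff_distrib sum_subtractf sum_distrib_right)
      also have "\<dots> = (1 - \<delta>) * \<pi> y" using heat_stat[OF g st that, of 1] fcD(7)[OF fc]
        by (simp add: algebra_simps)
      finally show ?thesis .
    qed
    show "nu S L \<mu> (t + 1) y - \<pi> y = (\<Sum>z\<in>S. (nu S L \<mu> t z - \<pi> z) * Q z y)" if "y \<in> S" for y
    proof -
      have z: "(\<Sum>z\<in>S. (nu S L \<mu> t z - \<pi> z)) = 0"
        using nu_sum[OF fc, of t] fcD(7)[OF fc] by (simp add: sum_subtractf)
      have "(\<Sum>z\<in>S. (nu S L \<mu> t z - \<pi> z) * Q z y) =
            (\<Sum>z\<in>S. (nu S L \<mu> t z - \<pi> z) * heat S L 1 z y) - (\<Sum>z\<in>S. (nu S L \<mu> t z - \<pi> z)) * (\<delta> * \<pi> y)"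
        unfolding Q_def by (simp add: right_diff_distrib sum_subtractf sum_distrib_right[symmetric])
      also have "\<dots> = (\<Sum>z\<in>S. (nu S L \<mu> t z - \<pi> z) * heat S L 1 z y)" using z by simp
      also have "\<dots> = nu S L \<mu> (t + 1) y - \<pi> y"
        using nu_semi[OF fc that, of t 1] heat_stat[OF g st that, of 1]
        by (simp add: left_diff_distrib sum_subtractf)
      finally show ?thesis by simp
    qed
  qed
  moreover have mm1: "(1 - \<delta>) * (1 - \<delta>) \<le> (1 - \<delta>) * 1" using d0 d1 by (intro mult_left_mono) auto
  have "(1 - \<delta>) * (1 - \<delta>) < 1" by (rule le_less_trans[OF mm1]) (use d0 in simp)
  moreover have "0 \<le> (1 - \<delta>) * (1 - \<delta>)" using d1 by simp
  ultimately show ?thesis using d0 d1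
    by (intro exI[of _ "(1 - \<delta>) * (1 - \<delta>)"]) auto
qed

lemma EE_small:
  assumes fc: "finite_chain \<mu> S L \<pi>" and e: "0 < \<epsilon>"
  shows "\<exists>T\<ge>0. \<forall>t\<ge>T. EE S L \<pi> \<mu> t \<le> \<epsilon>"
proof -
  obtain q where q: "0 \<le> q" "q < 1" "\<And>t. EE S L \<pi> \<mu> (t + 1) \<le> q * EE S L \<pi> \<mu> t"
    using EE_contr[OF fc] by blast
  let ?E = "EE S L \<pi> \<mu>"
  have geo: "?E (real n) \<le> q ^ n * ?E 0" for n
  proof (induction n)
    case 0 then show ?case by simp
  next
    case (Suc n)
    have "?E (real (Suc n)) = ?E (real n + 1)" by (simp add: add.commute)
    also have "\<dots> \<le> q * ?E (real n)" by (rule q(3))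
    also have "\<dots> \<le> q * (q ^ n * ?E 0)" by (rule mult_left_mono[OF Suc q(1)])
    finally show ?case by simp
  qed
  obtain n where n: "q ^ n * ?E 0 \<le> \<epsilon>"
  proof (cases "?E 0 = 0")
    case True then show ?thesis using that[of 0] e by simp
  next
    case False
    then have E0: "0 < ?E 0" using EE_nonneg[OF fc, of 0] by simp
    obtain n where "q ^ n < \<epsilon> / ?E 0" using real_arch_pow_inv[OF divide_pos_pos[OF e E0] q(2)] by blast
    then have "q ^ n * ?E 0 < \<epsilon>" using E0 by (simp add: less_divide_eq)
    then show ?thesis using that[of n] by simp
  qed
  have "\<forall>t\<ge>real n. ?E t \<le> \<epsilon>"
  proof (intro allI impI)
    fix t assume "real n \<le> t"
    then have "?E (real n + (t - real n)) \<le> ?E (real n)" by (intro EE_mono[OF fc]) simp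
    then have "?E t \<le> ?E (real n)" by simp
    then show "?E t \<le> \<epsilon>" using geo[of n] n by simp
  qed
  then show ?thesis by (intro exI[of _ "real n"]) simp
qed

definition lift :: "nat set \<Rightarrow> nat \<Rightarrow> ('a \<Rightarrow> 'a \<Rightarrow> real) \<Rightarrow> (nat \<Rightarrow> 'a) \<Rightarrow> (nat \<Rightarrow> 'a) \<Rightarrow> real" where
  "lift I i M x y = (if \<forall>j\<in>I - {i}. x j = y j then M (x i) (y i) else 0)"

lemma sum_lift:
  assumes x: "x \<in> PiE I S" and i: "i \<in> I" and finP: "finite (PiE I S)"
  shows "(\<Sum>z\<in>PiE I S. if \<forall>k\<in>I-{i}. x k = z k then g (z i) else 0) = (\<Sum>a\<in>S i. g a)"
proof -
  have eq: "{z \<in> PiE I S. \<forall>k\<in>I-{i}. x k = z k} = (\<lambda>a. x(i := a)) ` S i"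
  proof (intro equalityI subsetI)
    fix z assume z: "z \<in> {z \<in> PiE I S. \<forall>k\<in>I-{i}. x k = z k}"
    have "z = x(i := z i)"
    proof
      fix k show "z k = (x(i := z i)) k"
        using z x by (cases "k = i"; cases "k \<in> I") (auto simp: PiE_def extensional_def)
    qed
    moreover have "z i \<in> S i" using z i by (auto simp: PiE_def Pi_def)
    ultimately show "z \<in> (\<lambda>a. x(i := a)) ` S i" by blast
  next
    fix z assume "z \<in> (\<lambda>a. x(i := a)) ` S i"
    then obtain a where "a \<in> S i" "z = x(i := a)" by blast
    then show "z \<in> {z \<in> PiE I S. \<forall>k\<in>I-{i}. x k = z k}" using x i
      by (auto simp: PiE_def Pi_def extensional_def)
  qed
  have inj: "inj_on (\<lambda>a. x(i := a)) (S i)" by (rule inj_onI) (metis fun_upd_same)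
  have "(\<Sum>z\<in>PiE I S. if \<forall>k\<in>I-{i}. x k = z k then g (z i) else 0)
      = (\<Sum>z\<in>{z \<in> PiE I S. \<forall>k\<in>I-{i}. x k = z k}. g (z i))"
    by (rule sum.inter_filter[symmetric]) (rule finP)
  also have "\<dots> = (\<Sum>a\<in>S i. g a)"
    unfolding eq by (subst sum.reindex[OF inj]) simp
  finally show ?thesis .
qed

lemma sum_delta_PiE:
  assumes x: "x \<in> PiE I S" and y: "y \<in> PiE I S" and i: "i \<in> I" and iK: "i \<notin> K"
    and finP: "finite (PiE I S)"
  shows "(\<Sum>z\<in>PiE I S. if (\<forall>k\<in>I-{i}. x k = z k) \<and> (\<forall>k\<in>I-K. z k = y k) then F z else 0)
       = (if \<forall>k\<in>I - insert i K. x k = y k then F (x(i := y i)) else 0)"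
proof -
  let ?C = "\<forall>k\<in>I - insert i K. x k = y k"
  have eq: "{z \<in> PiE I S. (\<forall>k\<in>I-{i}. x k = z k) \<and> (\<forall>k\<in>I-K. z k = y k)} =
            (if ?C then {x(i := y i)} else {})"
  proof (intro equalityI subsetI)
    fix z assume z: "z \<in> {z \<in> PiE I S. (\<forall>k\<in>I-{i}. x k = z k) \<and> (\<forall>k\<in>I-K. z k = y k)}"
    have C: ?C using z by auto
    have "z = x(i := y i)"
    proof
      fix k show "z k = (x(i := y i)) k"
        using z x i iK by (cases "k = i"; cases "k \<in> I") (auto simp: PiE_def extensional_def)
    qed
    then show "z \<in> (if ?C then {x(i := y i)} else {})" using C by simp
  next
    fix z assume "z \<in> (if ?C then {x(i := y i)} else {})"
    then have C: ?C and zz: "z = x(i := y i)" by (auto split: if_splits)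
    show "z \<in> {z \<in> PiE I S. (\<forall>k\<in>I-{i}. x k = z k) \<and> (\<forall>k\<in>I-K. z k = y k)}"
      using x y i C unfolding zz by (auto simp: PiE_def Pi_def extensional_def)
  qed
  have "(\<Sum>z\<in>PiE I S. if (\<forall>k\<in>I-{i}. x k = z k) \<and> (\<forall>k\<in>I-K. z k = y k) then F z else 0)
      = sum F {z \<in> PiE I S. (\<forall>k\<in>I-{i}. x k = z k) \<and> (\<forall>k\<in>I-K. z k = y k)}"
    by (rule sum.inter_filter[symmetric]) (rule finP)
  also have "\<dots> = (if ?C then F (x(i := y i)) else 0)" unfolding eq by simp
  finally show ?thesis .
qed

lemma lift_PiE_eq: "x \<in> PiE I S \<Longrightarrow> y \<in> PiE I S \<Longrightarrow> (\<forall>k\<in>I. x k = y k) \<longleftrightarrow> x = y"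
  by (auto simp: PiE_def extensional_def fun_eq_iff)

lemma mpow_lift:
  assumes finP: "finite (PiE I S)" and i: "i \<in> I" and x: "x \<in> PiE I S" and y: "y \<in> PiE I S"
  shows "mpow (PiE I S) (lift I i M) k x y = lift I i (mpow (S i) M k) x y"
  using x
proof (induction k arbitrary: x)
  case 0
  have "(\<forall>j\<in>I - {i}. x j = y j) \<and> x i = y i \<longleftrightarrow> (\<forall>k\<in>I. x k = y k)" using i by auto
  then show ?case using lift_PiE_eq[OF 0 y] by (auto simp: lift_def)
next
  case (Suc k)
  have "mpow (PiE I S) (lift I i M) (Suc k) x y =
        (\<Sum>z\<in>PiE I S. lift I i M x z * lift I i (mpow (S i) M k) z y)"
    using Suc by simp
  also have "\<dots> = lift I i (mpow (S i) M (Suc k)) x y"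
  proof (cases "\<forall>j\<in>I - {i}. x j = y j")
    case True
    have "(\<Sum>z\<in>PiE I S. lift I i M x z * lift I i (mpow (S i) M k) z y) =
          (\<Sum>z\<in>PiE I S. if \<forall>j\<in>I-{i}. x j = z j then M (x i) (z i) * mpow (S i) M k (z i) (y i) else 0)"
      using True by (intro sum.cong refl) (auto simp: lift_def)
    also have "\<dots> = (\<Sum>a\<in>S i. M (x i) a * mpow (S i) M k a (y i))"
      by (rule sum_lift[OF Suc.prems i finP])
    finally show ?thesis using True by (simp add: lift_def)
  next
    case False
    have z0: "lift I i M x z * lift I i (mpow (S i) M k) z y = 0" for z
      using False by (auto simp: lift_def)
    have "(\<Sum>z\<in>PiE I S. lift I i M x z * lift I i (mpow (S i) M k) z y) = 0"
      by (rule sum.neutral) (simp add: z0)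
    then show ?thesis using False by (simp only: lift_def if_False)
  qed
  finally show ?case .
qed

lemma ex_lift:
  assumes finP: "finite (PiE I S)" and i: "i \<in> I" and x: "x \<in> PiE I S" and y: "y \<in> PiE I S"
  shows "ex (PiE I S) (lift I i M) x y = lift I i (ex (S i) M) x y"
proof (cases "\<forall>j\<in>I - {i}. x j = y j")
  case True then show ?thesis unfolding ex_def mpow_lift[OF assms] by (simp add: lift_def)
next
  case False
  then have "\<And>N. lift I i N x y = 0" by (simp only: lift_def if_False)
  then show ?thesis unfolding ex_def mpow_lift[OF assms] by simp
qed

lemma mm_lift_lift:
  assumes finP: "finite (PiE I S)" and i: "i \<in> I" and j: "j \<in> I" and ij: "i \<noteq> j"
    and x: "x \<in> PiE I S" and y: "y \<in> PiE I S"
  shows "mm (PiE I S) (lift I i M) (lift I j N) x y =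
     (if \<forall>k\<in>I - {i, j}. x k = y k then M (x i) (y i) * N (x j) (y j) else 0)"
proof -
  have "mm (PiE I S) (lift I i M) (lift I j N) x y =
     (\<Sum>z\<in>PiE I S. if (\<forall>k\<in>I-{i}. x k = z k) \<and> (\<forall>k\<in>I-{j}. z k = y k) then M (x i) (z i) * N (z j) (y j) else 0)"
    unfolding mm_def by (intro sum.cong refl) (auto simp: lift_def)
  also have "\<dots> = (if \<forall>k\<in>I - insert i {j}. x k = y k then M (x i) ((x(i := y i)) i) * N ((x(i := y i)) j) (y j) else 0)"
    by (rule sum_delta_PiE[OF x y i _ finP]) (use ij in simp)
  also have "\<dots> = (if \<forall>k\<in>I - {i, j}. x k = y k then M (x i) (y i) * N (x j) (y j) else 0)"
    using ij by simp
  finally show ?thesis .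
qed

lemma lift_commute:
  assumes finP: "finite (PiE I S)" and i: "i \<in> I" and j: "j \<in> I" and ij: "i \<noteq> j"
    and x: "x \<in> PiE I S" and y: "y \<in> PiE I S"
  shows "mm (PiE I S) (lift I i M) (lift I j N) x y = mm (PiE I S) (lift I j N) (lift I i M) x y"
  unfolding mm_lift_lift[OF finP i j ij x y] mm_lift_lift[OF finP j i ij[symmetric] x y]
  by (simp add: insert_commute mult.commute)

lemma mm_sum_right: "mm S A (\<lambda>u v. \<Sum>j\<in>J. B j u v) x y = (\<Sum>j\<in>J. mm S A (B j) x y)"
  unfolding mm_def by (simp add: sum_distrib_left) (rule sum.swap)

lemma mm_sum_left: "mm S (\<lambda>u v. \<Sum>j\<in>J. B j u v) A x y = (\<Sum>j\<in>J. mm S (B j) A x y)"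
  unfolding mm_def by (simp add: sum_distrib_right) (rule sum.swap)

lemma ex_zero:
  assumes "finite S" "x \<in> S"
  shows "ex S (\<lambda>u v. 0) x y = (if x = y then 1 else 0)"
proof -
  have "mpow S (\<lambda>u v. 0) k x y / fact k = (if k = 0 then (if x = y then 1 else 0) else 0)" for k
    by (cases k) simp_all
  then have "(\<lambda>k. mpow S (\<lambda>u v. 0) k x y / fact k) = (\<lambda>k. if k = 0 then (if x = y then 1 else 0) else 0)"
    by auto
  moreover have "(\<lambda>k::nat. if k = 0 then (if x = y then 1 else 0) else 0) sums (if x = y then (1::real) else 0)"
    using sums_single[of 0 "\<lambda>_. if x = y then 1 else (0::real)"] by simp
  ultimately show ?thesis unfolding ex_def by (simp add: sums_iff)
qed

lemma ex_sum_lift: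
  assumes finP: "finite (PiE I S)"
  shows "finite J \<Longrightarrow> J \<subseteq> I \<Longrightarrow> \<forall>x\<in>PiE I S. \<forall>y\<in>PiE I S.
     ex (PiE I S) (\<lambda>u v. \<Sum>i\<in>J. lift I i (Q i) u v) x y =
       (if \<forall>k\<in>I - J. x k = y k then \<Prod>i\<in>J. ex (S i) (Q i) (x i) (y i) else 0)"
proof (induction J rule: finite_induct)
  case empty
  show ?case
  proof (intro ballI)
    fix x y assume x: "x \<in> PiE I S" and y: "y \<in> PiE I S"
    show "ex (PiE I S) (\<lambda>u v. \<Sum>i\<in>{}. lift I i (Q i) u v) x y =
       (if \<forall>k\<in>I - {}. x k = y k then \<Prod>i\<in>{}. ex (S i) (Q i) (x i) (y i) else 0)"
      using ex_zero[OF finP x, of y] lift_PiE_eq[OF x y] by simp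
  qed
next
  case (insert i J)
  have i: "i \<in> I" and JI: "J \<subseteq> I" using insert.prems by auto
  let ?P = "PiE I S"
  let ?G = "\<lambda>u v. \<Sum>j\<in>J. lift I j (Q j) u v"
  show ?case
  proof (intro ballI)
    fix x y assume x: "x \<in> ?P" and y: "y \<in> ?P"
    have "ex ?P (\<lambda>u v. \<Sum>j\<in>insert i J. lift I j (Q j) u v) x y = ex ?P (\<lambda>u v. lift I i (Q i) u v + ?G u v) x y"
      using insert.hyps by simp
    also have "\<dots> = mm ?P (ex ?P (lift I i (Q i))) (ex ?P ?G) x y"
    proof (rule ex_add[OF finP _ x y])
      fix u v assume u: "u \<in> ?P" and v: "v \<in> ?P"
      have "mm ?P (lift I i (Q i)) ?G u v = (\<Sum>j\<in>J. mm ?P (lift I i (Q i)) (lift I j (Q j)) u v)"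
        by (rule mm_sum_right)
      also have "\<dots> = (\<Sum>j\<in>J. mm ?P (lift I j (Q j)) (lift I i (Q i)) u v)"
      proof (rule sum.cong[OF refl])
        fix j assume "j \<in> J"
        then have "j \<in> I" "i \<noteq> j" using JI insert.hyps by auto
        then show "mm ?P (lift I i (Q i)) (lift I j (Q j)) u v = mm ?P (lift I j (Q j)) (lift I i (Q i)) u v"
          by (intro lift_commute[OF finP i _ _ u v])
      qed
      also have "\<dots> = mm ?P ?G (lift I i (Q i)) u v" by (rule mm_sum_left[symmetric])
      finally show "mm ?P (\<lambda>a b. lift I i (Q i) a b) ?G u v = mm ?P ?G (\<lambda>a b. lift I i (Q i) a b) u v" by simp
    qed
    also have "\<dots> = (\<Sum>z\<in>?P. if (\<forall>k\<in>I-{i}. x k = z k) \<and> (\<forall>k\<in>I-J. z k = y k)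
          then ex (S i) (Q i) (x i) (z i) * (\<Prod>j\<in>J. ex (S j) (Q j) (z j) (y j)) else 0)"
      unfolding mm_def
    proof (rule sum.cong[OF refl])
      fix z assume z: "z \<in> ?P"
      show "ex ?P (lift I i (Q i)) x z * ex ?P ?G z y = (if (\<forall>k\<in>I-{i}. x k = z k) \<and> (\<forall>k\<in>I-J. z k = y k)
          then ex (S i) (Q i) (x i) (z i) * (\<Prod>j\<in>J. ex (S j) (Q j) (z j) (y j)) else 0)"
        using insert.IH[OF JI] z y unfolding ex_lift[OF finP i x z] by (auto simp: lift_def)
    qed
    also have "\<dots> = (if \<forall>k\<in>I - insert i J. x k = y k then
          ex (S i) (Q i) (x i) ((x(i := y i)) i) * (\<Prod>j\<in>J. ex (S j) (Q j) ((x(i := y i)) j) (y j)) else 0)"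
      by (rule sum_delta_PiE[OF x y i insert.hyps(2) finP])
    also have "\<dots> = (if \<forall>k\<in>I - insert i J. x k = y k then \<Prod>j\<in>insert i J. ex (S j) (Q j) (x j) (y j) else 0)"
    proof -
      have "(\<Prod>j\<in>J. ex (S j) (Q j) ((x(i := y i)) j) (y j)) = (\<Prod>j\<in>J. ex (S j) (Q j) (x j) (y j))"
        using insert.hyps(2) by (intro prod.cong refl) auto
      then show ?thesis using insert.hyps by simp
    qed
    finally show "ex ?P (\<lambda>u v. \<Sum>j\<in>insert i J. lift I j (Q j) u v) x y =
       (if \<forall>k\<in>I - insert i J. x k = y k then \<Prod>j\<in>insert i J. ex (S j) (Q j) (x j) (y j) else 0)" .
  qed
qed

lemma heat_prod:
  assumes finI: "finite I" and finS: "\<And>i. i \<in> I \<Longrightarrow> finite (S i)"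
    and x: "x \<in> PiE I S" and y: "y \<in> PiE I S"
  shows "heat (prod_space I S) (prod_gen I p L) t x y = (\<Prod>i\<in>I. heat (S i) (L i) (p i * t) (x i) (y i))"
proof -
  have finP: "finite (PiE I S)" using finI finS by (rule finite_PiE)
  have "(\<lambda>u v. t * prod_gen I p L u v) = (\<lambda>u v. \<Sum>i\<in>I. lift I i (\<lambda>a b. (p i * t) * L i a b) u v)"
    unfolding prod_gen_def lift_def by (intro ext) (simp add: sum_distrib_left if_distrib mult_ac cong: if_cong)
  then have "heat (prod_space I S) (prod_gen I p L) t x y =
        ex (PiE I S) (\<lambda>u v. \<Sum>i\<in>I. lift I i (\<lambda>a b. (p i * t) * L i a b) u v) x y"
    unfolding heat_ex prod_space_def by simp
  also have "\<dots> = (\<Prod>i\<in>I. ex (S i) (\<lambda>a b. (p i * t) * L i a b) (x i) (y i))"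
    using ex_sum_lift[OF finP finI order_refl] x y by simp
  finally show ?thesis by (simp add: heat_ex)
qed

lemma sum_PiE_prod:
  fixes f :: "'i \<Rightarrow> 'a \<Rightarrow> real"
  assumes "finite I" "\<And>i. i \<in> I \<Longrightarrow> finite (S i)"
  shows "(\<Sum>y\<in>PiE I S. \<Prod>i\<in>I. f i (y i)) = (\<Prod>i\<in>I. \<Sum>a\<in>S i. f i a)"
  using prod_sum_PiE[OF assms, where f=f] by simp

lemma prod_d2:
  assumes finI: "finite I" and fc: "\<And>i. i \<in> I \<Longrightarrow> finite_chain (\<mu> i) (S i) (L i) (\<pi> i)"
  shows "(d2 (prod_space I S) (prod_gen I p L) (prod_distr I \<pi>) (prod_distr I \<mu>) t)\<^sup>2 =
         (\<Prod>i\<in>I. 1 + (d2 (S i) (L i) (\<pi> i) (\<mu> i) (p i * t))\<^sup>2) - 1"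
proof -
  have finS: "\<And>i. i \<in> I \<Longrightarrow> finite (S i)" using fcD(3)[OF fc] by blast
  let ?P = "PiE I S"
  define N where "N i a = nu (S i) (L i) (\<mu> i) (p i * t) a" for i a
  have nuP: "(\<Sum>x\<in>?P. prod_distr I \<mu> x * heat (prod_space I S) (prod_gen I p L) t x y) = (\<Prod>i\<in>I. N i (y i))"
    if y: "y \<in> ?P" for y
  proof -
    have "(\<Sum>x\<in>?P. prod_distr I \<mu> x * heat (prod_space I S) (prod_gen I p L) t x y)
        = (\<Sum>x\<in>?P. \<Prod>i\<in>I. \<mu> i (x i) * heat (S i) (L i) (p i * t) (x i) (y i))"
      by (intro sum.cong refl) (simp add: prod_distr_def heat_prod[OF finI finS _ y] prod.distrib)
    also have "\<dots> = (\<Prod>i\<in>I. \<Sum>a\<in>S i. \<mu> i a * heat (S i) (L i) (p i * t) a (y i))"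
      by (rule sum_PiE_prod[OF finI finS])
    finally show ?thesis unfolding N_def nu_def .
  qed
  have ppos: "0 < \<pi> i a" if "i \<in> I" "a \<in> S i" for i a using pi_pos[OF fc[OF that(1)] that(2)] .
  have trm: "((\<Sum>x\<in>?P. prod_distr I \<mu> x * heat (prod_space I S) (prod_gen I p L) t x y) / prod_distr I \<pi> y - 1)\<^sup>2
        * prod_distr I \<pi> y
      = (\<Prod>i\<in>I. (N i (y i))\<^sup>2 / \<pi> i (y i)) - 2 * (\<Prod>i\<in>I. N i (y i)) + (\<Prod>i\<in>I. \<pi> i (y i))"
    if y: "y \<in> ?P" for y
  proof -
    have pp: "0 < (\<Prod>i\<in>I. \<pi> i (y i))" using y ppos by (intro prod_pos) (auto simp: PiE_def Pi_def)
    have "(\<Prod>i\<in>I. (N i (y i))\<^sup>2 / \<pi> i (y i)) = (\<Prod>i\<in>I. N i (y i))\<^sup>2 / (\<Prod>i\<in>I. \<pi> i (y i))"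
      by (simp add: prod_dividef prod_power_distrib)
    moreover have "((\<Prod>i\<in>I. N i (y i)) / (\<Prod>i\<in>I. \<pi> i (y i)) - 1)\<^sup>2 * (\<Prod>i\<in>I. \<pi> i (y i))
       = (\<Prod>i\<in>I. N i (y i))\<^sup>2 / (\<Prod>i\<in>I. \<pi> i (y i)) - 2 * (\<Prod>i\<in>I. N i (y i)) + (\<Prod>i\<in>I. \<pi> i (y i))"
      using pp by (simp add: field_simps power2_eq_square)
    ultimately show ?thesis unfolding nuP[OF y] unfolding prod_distr_def by simp
  qed
  have sq: "(\<Sum>a\<in>S i. (N i a)\<^sup>2 / \<pi> i a) = 1 + (d2 (S i) (L i) (\<pi> i) (\<mu> i) (p i * t))\<^sup>2"
    if i: "i \<in> I" for i
  proof -
    have "(d2 (S i) (L i) (\<pi> i) (\<mu> i) (p i * t))\<^sup>2 = (\<Sum>a\<in>S i. (N i a - \<pi> i a)\<^sup>2 / \<pi> i a)"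
      unfolding d2_sq[OF fc[OF i]] EE_def N_def ..
    also have "\<dots> = (\<Sum>a\<in>S i. (N i a)\<^sup>2 / \<pi> i a - 2 * N i a + \<pi> i a)"
    proof (rule sum.cong[OF refl])
      fix a assume "a \<in> S i"
      then have "0 < \<pi> i a" by (rule ppos[OF i])
      then show "(N i a - \<pi> i a)\<^sup>2 / \<pi> i a = (N i a)\<^sup>2 / \<pi> i a - 2 * N i a + \<pi> i a"
        by (simp add: field_simps power2_eq_square)
    qed
    also have "\<dots> = (\<Sum>a\<in>S i. (N i a)\<^sup>2 / \<pi> i a) - 2 * (\<Sum>a\<in>S i. N i a) + (\<Sum>a\<in>S i. \<pi> i a)"
      by (simp add: sum.distrib sum_subtractf sum_distrib_left)
    also have "\<dots> = (\<Sum>a\<in>S i. (N i a)\<^sup>2 / \<pi> i a) - 1"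
      using nu_sum[OF fc[OF i]] fcD(7)[OF fc[OF i]] unfolding N_def by simp
    finally show ?thesis by simp
  qed
  have "(\<Sum>y\<in>?P. ((\<Sum>x\<in>?P. prod_distr I \<mu> x * heat (prod_space I S) (prod_gen I p L) t x y) / prod_distr I \<pi> y - 1)\<^sup>2
        * prod_distr I \<pi> y)
      = (\<Sum>y\<in>?P. (\<Prod>i\<in>I. (N i (y i))\<^sup>2 / \<pi> i (y i)) - 2 * (\<Prod>i\<in>I. N i (y i)) + (\<Prod>i\<in>I. \<pi> i (y i)))"
    by (intro sum.cong refl) (rule trm)
  also have "\<dots> = (\<Prod>i\<in>I. \<Sum>a\<in>S i. (N i a)\<^sup>2 / \<pi> i a) - 2 * (\<Prod>i\<in>I. \<Sum>a\<in>S i. N i a) + (\<Prod>i\<in>I. \<Sum>a\<in>S i. \<pi> i a)"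
    using sum_PiE_prod[OF finI finS, where f="\<lambda>i a. (N i a)\<^sup>2 / \<pi> i a"]
      sum_PiE_prod[OF finI finS, where f=N] sum_PiE_prod[OF finI finS, where f=\<pi>]
    by (simp add: sum.distrib sum_subtractf sum_distrib_left[symmetric])
  also have "\<dots> = (\<Prod>i\<in>I. 1 + (d2 (S i) (L i) (\<pi> i) (\<mu> i) (p i * t))\<^sup>2) - 1"
  proof -
    have "(\<Prod>i\<in>I. \<Sum>a\<in>S i. N i a) = 1" using nu_sum[OF fc] unfolding N_def by simp
    moreover have "(\<Prod>i\<in>I. \<Sum>a\<in>S i. \<pi> i a) = 1" using fcD(7)[OF fc] by simp
    moreover have "(\<Prod>i\<in>I. \<Sum>a\<in>S i. (N i a)\<^sup>2 / \<pi> i a) = (\<Prod>i\<in>I. 1 + (d2 (S i) (L i) (\<pi> i) (\<mu> i) (p i * t))\<^sup>2)"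
      by (intro prod.cong refl) (rule sq)
    ultimately show ?thesis by simp
  qed
  finally have X: "(\<Sum>y\<in>?P. ((\<Sum>x\<in>?P. prod_distr I \<mu> x * heat (prod_space I S) (prod_gen I p L) t x y) / prod_distr I \<pi> y - 1)\<^sup>2
        * prod_distr I \<pi> y) = (\<Prod>i\<in>I. 1 + (d2 (S i) (L i) (\<pi> i) (\<mu> i) (p i * t))\<^sup>2) - 1" .
  have "1 \<le> (\<Prod>i\<in>I. 1 + (d2 (S i) (L i) (\<pi> i) (\<mu> i) (p i * t))\<^sup>2)"
    by (intro prod_ge_1) simp
  moreover have "d2 (prod_space I S) (prod_gen I p L) (prod_distr I \<pi>) (prod_distr I \<mu>) t =
     sqrt ((\<Prod>i\<in>I. 1 + (d2 (S i) (L i) (\<pi> i) (\<mu> i) (p i * t))\<^sup>2) - 1)"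
    using X unfolding prod_space_def unfolding d2_def[of "PiE I S"] by simp
  ultimately show ?thesis by simp
qed

lemma prod_ineqs:
  fixes a :: "nat \<Rightarrow> real"
  assumes "finite I" "\<And>i. i \<in> I \<Longrightarrow> 0 \<le> a i"
  shows "1 + (\<Sum>i\<in>I. a i) \<le> (\<Prod>i\<in>I. 1 + a i)" and "(\<Prod>i\<in>I. 1 + a i) \<le> exp (\<Sum>i\<in>I. a i)"
proof -
  show "1 + (\<Sum>i\<in>I. a i) \<le> (\<Prod>i\<in>I. 1 + a i)"
    using assms
  proof (induction I rule: finite_induct)
    case empty then show ?case by simp
  next
    case (insert i I)
    have ai: "0 \<le> a i" using insert.prems by simp
    have IH: "1 + (\<Sum>i\<in>I. a i) \<le> (\<Prod>i\<in>I. 1 + a i)" using insert.IH insert.prems by simp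
    have s0: "0 \<le> (\<Sum>i\<in>I. a i)" using insert.prems by (intro sum_nonneg) simp
    have "1 + (\<Sum>j\<in>insert i I. a j) = 1 + a i + (\<Sum>j\<in>I. a j)" using insert.hyps by simp
    also have "\<dots> \<le> (1 + a i) * (1 + (\<Sum>j\<in>I. a j))" using ai s0 by (simp add: algebra_simps)
    also have "\<dots> \<le> (1 + a i) * (\<Prod>j\<in>I. 1 + a j)" using IH ai by (intro mult_left_mono) auto
    finally show ?case using insert.hyps by simp
  qed
  have "(\<Prod>i\<in>I. 1 + a i) \<le> (\<Prod>i\<in>I. exp (a i))"
    using assms by (intro prod_mono) auto
  then show "(\<Prod>i\<in>I. 1 + a i) \<le> exp (\<Sum>i\<in>I. a i)" by (simp add: exp_sum assms(1))
qed

lemma D_mono: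
  assumes fc: "\<And>i. i \<in> I \<Longrightarrow> finite_chain (\<mu> i) (S i) (L i) (\<pi> i)"
    and p: "\<And>i. i \<in> I \<Longrightarrow> 0 < p i" and ts: "t \<le> s"
  shows "(\<Sum>i\<in>I. (d2 (S i) (L i) (\<pi> i) (\<mu> i) (p i * s))\<^sup>2) \<le> (\<Sum>i\<in>I. (d2 (S i) (L i) (\<pi> i) (\<mu> i) (p i * t))\<^sup>2)"
proof (rule sum_mono)
  fix i assume i: "i \<in> I"
  have "EE (S i) (L i) (\<pi> i) (\<mu> i) (p i * t + (p i * s - p i * t)) \<le> EE (S i) (L i) (\<pi> i) (\<mu> i) (p i * t)"
    using p[OF i] ts by (intro EE_mono[OF fc[OF i]]) (simp add: algebra_simps)
  then show "(d2 (S i) (L i) (\<pi> i) (\<mu> i) (p i * s))\<^sup>2 \<le> (d2 (S i) (L i) (\<pi> i) (\<mu> i) (p i * t))\<^sup>2"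
    by (simp add: d2_sq[OF fc[OF i]])
qed

lemma D_small:
  assumes finI: "finite I" and fc: "\<And>i. i \<in> I \<Longrightarrow> finite_chain (\<mu> i) (S i) (L i) (\<pi> i)"
    and p: "\<And>i. i \<in> I \<Longrightarrow> 0 < p i" and e: "0 < \<epsilon>"
  shows "\<exists>t\<ge>0. (\<Sum>i\<in>I. (d2 (S i) (L i) (\<pi> i) (\<mu> i) (p i * t))\<^sup>2) \<le> \<epsilon>"
proof -
  define e' where "e' = \<epsilon> / (real (card I) + 1)"
  have e': "0 < e'" using e by (simp add: e'_def)
  have "\<forall>i\<in>I. \<exists>T\<ge>0. \<forall>t\<ge>T. EE (S i) (L i) (\<pi> i) (\<mu> i) t \<le> e'"
    using EE_small[OF fc e'] by blast
  then obtain T where T: "\<And>i. i \<in> I \<Longrightarrow> 0 \<le> T i \<and> (\<forall>t\<ge>T i. EE (S i) (L i) (\<pi> i) (\<mu> i) t \<le> e')"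
    by metis
  define t where "t = (\<Sum>i\<in>I. T i / p i)"
  have t0: "0 \<le> t" unfolding t_def using T p by (intro sum_nonneg divide_nonneg_pos) auto
  have each: "(d2 (S i) (L i) (\<pi> i) (\<mu> i) (p i * t))\<^sup>2 \<le> e'" if i: "i \<in> I" for i
  proof -
    have "T i / p i \<le> t" unfolding t_def
      by (rule member_le_sum[OF i _ finI]) (use T p in \<open>auto intro: divide_nonneg_pos\<close>)
    then have "T i \<le> p i * t" using p[OF i] by (simp add: divide_le_eq mult.commute)
    then show ?thesis using T[OF i] by (simp add: d2_sq[OF fc[OF i]])
  qed
  have "(\<Sum>i\<in>I. (d2 (S i) (L i) (\<pi> i) (\<mu> i) (p i * t))\<^sup>2) \<le> (\<Sum>i\<in>I. e')"
    by (rule sum_mono) (rule each)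
  also have "\<dots> = real (card I) * e'" by simp
  also have "\<dots> \<le> \<epsilon>" unfolding e'_def using e by (simp add: field_simps)
  finally show ?thesis using t0 by blast
qed

theorem proposition4p1:
  fixes ell :: "nat \<Rightarrow> nat"
    and S :: "nat \<Rightarrow> nat \<Rightarrow> 'a set"
    and L :: "nat \<Rightarrow> nat \<Rightarrow> 'a \<Rightarrow> 'a \<Rightarrow> real"
    and \<mu> \<pi> :: "nat \<Rightarrow> nat \<Rightarrow> 'a \<Rightarrow> real"
    and p :: "nat \<Rightarrow> nat \<Rightarrow> real"
  assumes chains: "\<And>n i. 1 \<le> n \<Longrightarrow> i \<in> {1..ell n} \<Longrightarrow>
              finite_chain (\<mu> n i) (S n i) (L n i) (\<pi> n i)"
    and p_pos: "\<And>n i. 1 \<le> n \<Longrightarrow> i \<in> {1..ell n} \<Longrightarrow> 0 < p n i"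
    and p_sum: "\<And>n. 1 \<le> n \<Longrightarrow> (\<Sum>i\<in>{1..ell n}. p n i) \<le> 1"
  defines "dn \<equiv> \<lambda>n t. d2 (prod_space {1..ell n} (S n)) (prod_gen {1..ell n} (p n) (L n))
                         (prod_distr {1..ell n} (\<pi> n)) (prod_distr {1..ell n} (\<mu> n)) t"
    and "D \<equiv> \<lambda>n t. (\<Sum>i\<in>{1..ell n}. (d2 (S n i) (L n i) (\<pi> n i) (\<mu> n i) (p n i * t))\<^sup>2)"
  shows "(L2_cutoff dn \<longleftrightarrow>
           (\<exists>tn :: nat \<Rightarrow> real. (\<forall>n. 0 < tn n) \<and>
              (\<forall>a>0. (1 < a \<longrightarrow> ((\<lambda>n. D n (a * tn n)) \<longlonglongrightarrow> 0)) \<and>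
                     (a < 1 \<longrightarrow> filterlim (\<lambda>n. D n (a * tn n)) at_top sequentially))))
       \<and> (\<forall>n\<ge>1. \<forall>\<epsilon>>0.
             mix_time (dn n) (sqrt (exp \<epsilon> - 1)) \<le> mix_time (D n) \<epsilon> \<and>
             mix_time (D n) \<epsilon> \<le> mix_time (dn n) (sqrt \<epsilon>))"
proof -
  let ?I = "\<lambda>n. {1..ell n}"
  have fcn: "\<And>n i. 1 \<le> n \<Longrightarrow> i \<in> ?I n \<Longrightarrow> finite_chain (\<mu> n i) (S n i) (L n i) (\<pi> n i)"
    by (rule chains)
  have F1: "D n t \<le> (dn n t)\<^sup>2 \<and> (dn n t)\<^sup>2 \<le> exp (D n t) - 1" if n: "1 \<le> n" for n t
  proof -
    have sq: "(dn n t)\<^sup>2 = (\<Prod>i\<in>?I n. 1 + (d2 (S n i) (L n i) (\<pi> n i) (\<mu> n i) (p n i * t))\<^sup>2) - 1"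
      unfolding dn_def by (rule prod_d2) (auto intro: fcn[OF n])
    have "1 + D n t \<le> (\<Prod>i\<in>?I n. 1 + (d2 (S n i) (L n i) (\<pi> n i) (\<mu> n i) (p n i * t))\<^sup>2)"
      "(\<Prod>i\<in>?I n. 1 + (d2 (S n i) (L n i) (\<pi> n i) (\<mu> n i) (p n i * t))\<^sup>2) \<le> exp (D n t)"
      unfolding D_def by (rule prod_ineqs; simp)+
    then show ?thesis using sq by simp
  qed
  have dn0: "0 \<le> dn n t" if n: "1 \<le> n" for n t
    unfolding dn_def d2_def
  proof (intro real_sqrt_ge_zero sum_nonneg mult_nonneg_nonneg zero_le_power2)
    fix y assume "y \<in> prod_space (?I n) (S n)"
    then show "0 \<le> prod_distr (?I n) (\<pi> n) y" unfolding prod_distr_def prod_space_def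
      by (intro prod_nonneg) (auto intro: fcD(6)[OF fcn[OF n]] simp: PiE_def Pi_def)
  qed
  have D0: "0 \<le> D n t" for n t unfolding D_def by (intro sum_nonneg) simp
  have F2: "D n s \<le> D n t" if n: "1 \<le> n" and ts: "t \<le> s" for n t s
    unfolding D_def by (rule D_mono[OF fcn[OF n] p_pos[OF n] ts])
  have F3: "\<exists>t\<ge>0. D n t \<le> \<epsilon>" if n: "1 \<le> n" and e: "0 < \<epsilon>" for n \<epsilon>
    unfolding D_def by (rule D_small[OF _ fcn[OF n] p_pos[OF n] e]) simp
  have ev1: "eventually (\<lambda>n. 1 \<le> n) sequentially" by (rule eventually_ge_at_top)
  have part1: "L2_cutoff dn \<longleftrightarrow>
           (\<exists>tn :: nat \<Rightarrow> real. (\<forall>n. 0 < tn n) \<and>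
              (\<forall>a>0. (1 < a \<longrightarrow> ((\<lambda>n. D n (a * tn n)) \<longlonglongrightarrow> 0)) \<and>
                     (a < 1 \<longrightarrow> filterlim (\<lambda>n. D n (a * tn n)) at_top sequentially)))"
  proof
    assume "L2_cutoff dn"
    then obtain tn :: "nat \<Rightarrow> real" where tn: "\<forall>n. 0 < tn n" and
      cut: "\<And>a. 0 < a \<Longrightarrow> a < 1 \<Longrightarrow> ((\<lambda>n. dn n ((1 + a) * tn n)) \<longlonglongrightarrow> 0) \<and>
        filterlim (\<lambda>n. dn n ((1 - a) * tn n)) at_top sequentially"
      unfolding L2_cutoff_def by blast
    show "\<exists>tn :: nat \<Rightarrow> real. (\<forall>n. 0 < tn n) \<and>
              (\<forall>a>0. (1 < a \<longrightarrow> ((\<lambda>n. D n (a * tn n)) \<longlonglongrightarrow> 0)) \<and>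
                     (a < 1 \<longrightarrow> filterlim (\<lambda>n. D n (a * tn n)) at_top sequentially))"
    proof (intro exI[of _ tn] conjI allI impI tn)
      fix a :: real assume a0: "0 < a" and a1: "1 < a"
      define b where "b = min a (3/2)"
      have b: "1 < b" "b \<le> a" "b - 1 < 1" using a1 by (auto simp: b_def)
      have "(\<lambda>n. dn n ((1 + (b - 1)) * tn n)) \<longlonglongrightarrow> 0" using cut[of "b - 1"] b by simp
      then have l: "(\<lambda>n. dn n (b * tn n)) \<longlonglongrightarrow> 0" by simp
      have l2: "(\<lambda>n. (dn n (b * tn n))\<^sup>2) \<longlonglongrightarrow> 0" using tendsto_power[OF l, of 2] by simp
      show "(\<lambda>n. D n (a * tn n)) \<longlonglongrightarrow> 0"
      proof (rule tendsto_sandwich[OF _ _ tendsto_const l2])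
        show "eventually (\<lambda>n. 0 \<le> D n (a * tn n)) sequentially" by (simp add: D0)
        show "eventually (\<lambda>n. D n (a * tn n) \<le> (dn n (b * tn n))\<^sup>2) sequentially"
          using ev1
        proof eventually_elim
          case (elim n)
          have "D n (a * tn n) \<le> D n (b * tn n)"
            using tn b by (intro F2[OF elim] mult_right_mono) (auto intro: less_imp_le)
          also have "\<dots> \<le> (dn n (b * tn n))\<^sup>2" using F1[OF elim] by simp
          finally show ?case .
        qed
      qed
    next
      fix a :: real assume a0: "0 < a" and a1: "a < 1"
      have "filterlim (\<lambda>n. dn n ((1 - (1 - a)) * tn n)) at_top sequentially"
        using cut[of "1 - a"] a0 a1 by simp
      then have l: "filterlim (\<lambda>n. dn n (a * tn n)) at_top sequentially" by simp
      have "filterlim (\<lambda>n. 1 + (dn n (a * tn n))\<^sup>2) at_top sequentially"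
        by (rule filterlim_tendsto_add_at_top[OF tendsto_const filterlim_pow_at_top[OF _ l]]) simp
      then have l2: "filterlim (\<lambda>n. ln (1 + (dn n (a * tn n))\<^sup>2)) at_top sequentially"
        by (rule filterlim_compose[OF ln_at_top])
      show "filterlim (\<lambda>n. D n (a * tn n)) at_top sequentially"
      proof (rule filterlim_at_top_mono[OF l2])
        show "eventually (\<lambda>n. ln (1 + (dn n (a * tn n))\<^sup>2) \<le> D n (a * tn n)) sequentially"
          using ev1
        proof eventually_elim
          case (elim n)
          have "1 + (dn n (a * tn n))\<^sup>2 \<le> exp (D n (a * tn n))" using F1[OF elim, of "a * tn n"] by linarith
          then have "ln (1 + (dn n (a * tn n))\<^sup>2) \<le> ln (exp (D n (a * tn n)))"
            by (subst ln_le_cancel_iff) (auto intro: add_pos_nonneg)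
          then show ?case by simp
        qed
      qed
    qed (use tn in simp)
  next
    assume "\<exists>tn :: nat \<Rightarrow> real. (\<forall>n. 0 < tn n) \<and>
              (\<forall>a>0. (1 < a \<longrightarrow> ((\<lambda>n. D n (a * tn n)) \<longlonglongrightarrow> 0)) \<and>
                     (a < 1 \<longrightarrow> filterlim (\<lambda>n. D n (a * tn n)) at_top sequentially))"
    then obtain tn :: "nat \<Rightarrow> real" where tn: "\<forall>n. 0 < tn n" and
      H: "\<And>a. 0 < a \<Longrightarrow> (1 < a \<longrightarrow> ((\<lambda>n. D n (a * tn n)) \<longlonglongrightarrow> 0)) \<and>
                     (a < 1 \<longrightarrow> filterlim (\<lambda>n. D n (a * tn n)) at_top sequentially)"
      by blast
    show "L2_cutoff dn" unfolding L2_cutoff_def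
    proof (intro exI[of _ tn] conjI allI impI tn)
      fix a :: real assume a: "0 < a \<and> a < 1"
      have l: "(\<lambda>n. D n ((1 + a) * tn n)) \<longlonglongrightarrow> 0" using H[of "1 + a"] a by simp
      have l2: "(\<lambda>n. sqrt (exp (D n ((1 + a) * tn n)) - 1)) \<longlonglongrightarrow> sqrt (exp 0 - 1)"
        by (intro tendsto_intros l)
      show "(\<lambda>n. dn n ((1 + a) * tn n)) \<longlonglongrightarrow> 0"
      proof (rule tendsto_sandwich[OF _ _ tendsto_const])
        show "eventually (\<lambda>n. 0 \<le> dn n ((1 + a) * tn n)) sequentially"
          using ev1 by (rule eventually_mono) (rule dn0)
        show "eventually (\<lambda>n. dn n ((1 + a) * tn n) \<le> sqrt (exp (D n ((1 + a) * tn n)) - 1)) sequentially"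
          using ev1
        proof eventually_elim
          case (elim n)
          show ?case using F1[OF elim] dn0[OF elim] by (intro real_le_rsqrt) simp
        qed
        show "(\<lambda>n. sqrt (exp (D n ((1 + a) * tn n)) - 1)) \<longlonglongrightarrow> 0" using l2 by simp
      qed
    next
      fix a :: real assume a: "0 < a \<and> a < 1"
      have l: "filterlim (\<lambda>n. D n ((1 - a) * tn n)) at_top sequentially" using H[of "1 - a"] a by simp
      have l2: "filterlim (\<lambda>n. sqrt (D n ((1 - a) * tn n))) at_top sequentially"
        by (rule filterlim_compose[OF sqrt_at_top l])
      show "filterlim (\<lambda>n. dn n ((1 - a) * tn n)) at_top sequentially"
      proof (rule filterlim_at_top_mono[OF l2])
        show "eventually (\<lambda>n. sqrt (D n ((1 - a) * tn n)) \<le> dn n ((1 - a) * tn n)) sequentially"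
          using ev1
        proof eventually_elim
          case (elim n)
          show ?case using F1[OF elim, of "(1 - a) * tn n"] dn0[OF elim, of "(1 - a) * tn n"]
            by (intro real_le_lsqrt) auto
        qed
      qed
    qed (use tn in simp)
  qed
  have part2: "\<forall>n\<ge>1. \<forall>\<epsilon>>0.
             mix_time (dn n) (sqrt (exp \<epsilon> - 1)) \<le> mix_time (D n) \<epsilon> \<and>
             mix_time (D n) \<epsilon> \<le> mix_time (dn n) (sqrt \<epsilon>)"
  proof (intro allI impI conjI)
    fix n :: nat and \<epsilon> :: real assume n: "1 \<le> n" and e: "0 < \<epsilon>"
    let ?A = "{t. 0 \<le> t \<and> D n t \<le> \<epsilon>}"
    let ?B = "{t. 0 \<le> t \<and> dn n t \<le> sqrt (exp \<epsilon> - 1)}"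
    let ?C = "{t. 0 \<le> t \<and> dn n t \<le> sqrt \<epsilon>}"
    have AB: "?A \<subseteq> ?B"
    proof
      fix t assume "t \<in> ?A"
      then have t: "0 \<le> t" "D n t \<le> \<epsilon>" by auto
      have "(dn n t)\<^sup>2 \<le> exp \<epsilon> - 1" using F1[OF n, of t] t(2) by (meson diff_right_mono exp_le_cancel_iff order_trans)
      then have "dn n t \<le> sqrt (exp \<epsilon> - 1)" by (rule real_le_rsqrt)
      then show "t \<in> ?B" using t by simp
    qed
    have CA: "?C \<subseteq> ?A"
    proof
      fix t assume "t \<in> ?C"
      then have t: "0 \<le> t" "dn n t \<le> sqrt \<epsilon>" by auto
      have "(dn n t)\<^sup>2 \<le> (sqrt \<epsilon>)\<^sup>2" using t(2) dn0[OF n] by (intro power_mono) auto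
      then have "(dn n t)\<^sup>2 \<le> \<epsilon>" using e by simp
      then show "t \<in> ?A" using t F1[OF n, of t] by simp
    qed
    obtain t1 where t1: "0 \<le> t1" "D n t1 \<le> \<epsilon>" using F3[OF n e] by blast
    have Ane: "?A \<noteq> {}" using t1 by blast
    obtain t2 where t2: "0 \<le> t2" "D n t2 \<le> ln (1 + \<epsilon>)" using F3[OF n] e by (meson ln_gt_zero less_add_same_cancel1)
    have "(dn n t2)\<^sup>2 \<le> exp (ln (1 + \<epsilon>)) - 1" using F1[OF n, of t2] t2(2) by (meson diff_right_mono exp_le_cancel_iff order_trans)
    then have "(dn n t2)\<^sup>2 \<le> \<epsilon>" using e by simp
    then have "dn n t2 \<le> sqrt \<epsilon>" by (rule real_le_rsqrt)
    then have Cne: "?C \<noteq> {}" using t2 by blast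
    have bdA: "bdd_below ?A" and bdB: "bdd_below ?B" by (auto intro: bdd_belowI[of _ 0])
    show "mix_time (dn n) (sqrt (exp \<epsilon> - 1)) \<le> mix_time (D n) \<epsilon>"
      unfolding mix_time_def by (rule cInf_superset_mono[OF Ane bdB AB])
    show "mix_time (D n) \<epsilon> \<le> mix_time (dn n) (sqrt \<epsilon>)"
      unfolding mix_time_def by (rule cInf_superset_mono[OF Cne bdA CA])
  qed
  show ?thesis using part1 part2 by blast
qed

end
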